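(* Let $G$ be a prime $\{P_5,\overline{P_5},C_5\}$-free graph. Then $G$ has an antisimplicial vertex, or $G$ admits a 1-join.
   Context: All graphs are finite and simple. $P_n$ is the path on $n$ vertices, $C_n$ the cycle of length $n$, $\overline{G}$ the complement. $G$ is $H$-free if it has no induced subgraph isomorphic to $H$. A vertex $b\notin X$ is mixed on $X$ if it has both a neighbor and a non-neighbor in $X$. A homogeneous set is a set $X\subseteq V(G)$ with $1<|X|<|V(G)|$ such that no vertex outside $X$ is mixed on $X$. $G$ is prime if $|V(G)|\ge4$ and has no homogeneous set. A vertex $v$ is antisimplicial if $V(G)\setminus N(v)$ is a stable set. $G$ admits a 1-join if $V(G)$ can be partitioned into four non-empty pairwise disjoint sets $(A,B,C,D)$ such that $A$ is anticomplete to $C\cup D$ (no edges between them), and $B$ is complete to $C$ (all edges present) and anticomplete to $D$. *)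

theory Defs
  imports Main
begin

text \<open>A finite simple graph: vertex set V and adjacency relation E on V,
  symmetric and irreflexive. Only the restriction of E to V matters.\<close>

definition graph :: "'a set \<Rightarrow> ('a \<Rightarrow> 'a \<Rightarrow> bool) \<Rightarrow> bool" where
  "graph V E \<longleftrightarrow> finite V \<and> (\<forall>x\<in>V. \<forall>y\<in>V. E x y \<longleftrightarrow> E y x) \<and> (\<forall>x\<in>V. \<not> E x x)"

definition induced_sub :: "'b set \<Rightarrow> ('b \<Rightarrow> 'b \<Rightarrow> bool) \<Rightarrow> 'a set \<Rightarrow> ('a \<Rightarrow> 'a \<Rightarrow> bool) \<Rightarrow> bool" where
  "induced_sub W F V E \<longleftrightarrow> (\<exists>f. inj_on f W \<and> f ` W \<subseteq> V \<and>
      (\<forall>x\<in>W. \<forall>y\<in>W. E (f x) (f y) \<longleftrightarrow> F x y))"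

definition H_free :: "'b set \<Rightarrow> ('b \<Rightarrow> 'b \<Rightarrow> bool) \<Rightarrow> 'a set \<Rightarrow> ('a \<Rightarrow> 'a \<Rightarrow> bool) \<Rightarrow> bool" where
  "H_free W F V E \<longleftrightarrow> \<not> induced_sub W F V E"

definition compl_adj :: "('a \<Rightarrow> 'a \<Rightarrow> bool) \<Rightarrow> 'a \<Rightarrow> 'a \<Rightarrow> bool" where
  "compl_adj E x y \<longleftrightarrow> x \<noteq> y \<and> \<not> E x y"

definition path_adj :: "nat \<Rightarrow> nat \<Rightarrow> bool" where
  "path_adj i j \<longleftrightarrow> i = Suc j \<or> j = Suc i"

definition cycle_adj :: "nat \<Rightarrow> nat \<Rightarrow> nat \<Rightarrow> bool" where
  "cycle_adj n i j \<longleftrightarrow> i \<noteq> j \<and> (i = Suc j mod n \<or> j = Suc i mod n)"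

definition P5_free :: "'a set \<Rightarrow> ('a \<Rightarrow> 'a \<Rightarrow> bool) \<Rightarrow> bool" where
  "P5_free V E \<longleftrightarrow> H_free {0..<5::nat} path_adj V E"

definition coP5_free :: "'a set \<Rightarrow> ('a \<Rightarrow> 'a \<Rightarrow> bool) \<Rightarrow> bool" where
  "coP5_free V E \<longleftrightarrow> H_free {0..<5::nat} (compl_adj path_adj) V E"

definition C5_free :: "'a set \<Rightarrow> ('a \<Rightarrow> 'a \<Rightarrow> bool) \<Rightarrow> bool" where
  "C5_free V E \<longleftrightarrow> H_free {0..<5::nat} (cycle_adj 5) V E"

definition nbhd :: "'a set \<Rightarrow> ('a \<Rightarrow> 'a \<Rightarrow> bool) \<Rightarrow> 'a \<Rightarrow> 'a set" where
  "nbhd V E v = {u \<in> V. E v u}"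

definition mixed_on :: "('a \<Rightarrow> 'a \<Rightarrow> bool) \<Rightarrow> 'a \<Rightarrow> 'a set \<Rightarrow> bool" where
  "mixed_on E b X \<longleftrightarrow> (\<exists>x\<in>X. E b x) \<and> (\<exists>y\<in>X. \<not> E b y)"

definition homogeneous_set :: "'a set \<Rightarrow> ('a \<Rightarrow> 'a \<Rightarrow> bool) \<Rightarrow> 'a set \<Rightarrow> bool" where
  "homogeneous_set V E X \<longleftrightarrow> X \<subseteq> V \<and> 1 < card X \<and> card X < card V \<and>
     (\<forall>b\<in>V - X. \<not> mixed_on E b X)"

definition prime_graph :: "'a set \<Rightarrow> ('a \<Rightarrow> 'a \<Rightarrow> bool) \<Rightarrow> bool" where
  "prime_graph V E \<longleftrightarrow> card V \<ge> 4 \<and> \<not> (\<exists>X. homogeneous_set V E X)"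

definition stable_set :: "('a \<Rightarrow> 'a \<Rightarrow> bool) \<Rightarrow> 'a set \<Rightarrow> bool" where
  "stable_set E S \<longleftrightarrow> (\<forall>x\<in>S. \<forall>y\<in>S. \<not> E x y)"

definition antisimplicial :: "'a set \<Rightarrow> ('a \<Rightarrow> 'a \<Rightarrow> bool) \<Rightarrow> 'a \<Rightarrow> bool" where
  "antisimplicial V E v \<longleftrightarrow> v \<in> V \<and> stable_set E (V - nbhd V E v)"

definition complete_to :: "('a \<Rightarrow> 'a \<Rightarrow> bool) \<Rightarrow> 'a set \<Rightarrow> 'a set \<Rightarrow> bool" where
  "complete_to E X Y \<longleftrightarrow> (\<forall>x\<in>X. \<forall>y\<in>Y. E x y)"

definition anticomplete_to :: "('a \<Rightarrow> 'a \<Rightarrow> bool) \<Rightarrow> 'a set \<Rightarrow> 'a set \<Rightarrow> bool" where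
  "anticomplete_to E X Y \<longleftrightarrow> (\<forall>x\<in>X. \<forall>y\<in>Y. \<not> E x y)"

definition one_join :: "'a set \<Rightarrow> ('a \<Rightarrow> 'a \<Rightarrow> bool) \<Rightarrow> bool" where
  "one_join V E \<longleftrightarrow> (\<exists>A B C D.
      A \<noteq> {} \<and> B \<noteq> {} \<and> C \<noteq> {} \<and> D \<noteq> {} \<and>
      A \<union> B \<union> C \<union> D = V \<and>
      A \<inter> B = {} \<and> A \<inter> C = {} \<and> A \<inter> D = {} \<and>
      B \<inter> C = {} \<and> B \<inter> D = {} \<and> C \<inter> D = {} \<and>
      anticomplete_to E A (C \<union> D) \<and>
      complete_to E B C \<and> anticomplete_to E B D)"

end

theory Submission
  imports Defs "HOL-Library.List_Lexorder"
begin


lemma five_set: "{0..<5::nat} = {0,1,2,3,4}" by auto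

definition f5 :: "'a \<Rightarrow> 'a \<Rightarrow> 'a \<Rightarrow> 'a \<Rightarrow> 'a \<Rightarrow> nat \<Rightarrow> 'a" where
  "f5 x0 x1 x2 x3 x4 i = (if i = 0 then x0 else if i = 1 then x1 else if i = 2 then x2 else if i = 3 then x3 else x4)"

lemma f5_simps: "f5 x0 x1 x2 x3 x4 0 = x0" "f5 x0 x1 x2 x3 x4 1 = x1" "f5 x0 x1 x2 x3 x4 2 = x2"
  "f5 x0 x1 x2 x3 x4 3 = x3" "f5 x0 x1 x2 x3 x4 4 = x4" by (simp_all add: f5_def)

lemma f5_ind:
  assumes "x0\<in>V" "x1\<in>V" "x2\<in>V" "x3\<in>V" "x4\<in>V"
    "x0\<noteq>x1" "x0\<noteq>x2" "x0\<noteq>x3" "x0\<noteq>x4" "x1\<noteq>x2" "x1\<noteq>x3" "x1\<noteq>x4" "x2\<noteq>x3" "x2\<noteq>x4" "x3\<noteq>x4"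
    and adj: "\<forall>i\<in>{0,1,2,3,4::nat}. \<forall>j\<in>{0,1,2,3,4::nat}. E (f5 x0 x1 x2 x3 x4 i) (f5 x0 x1 x2 x3 x4 j) \<longleftrightarrow> F i j"
  shows "induced_sub {0..<5::nat} F V E"
  unfolding induced_sub_def five_set
proof (intro exI conjI)
  show "inj_on (f5 x0 x1 x2 x3 x4) {0, 1, 2, 3, 4}"
    unfolding inj_on_def using assms(6-15) by (simp add: f5_def)
  show "f5 x0 x1 x2 x3 x4 ` {0, 1, 2, 3, 4} \<subseteq> V" using assms(1-5) by (simp add: f5_def)
  show "\<forall>i\<in>{0,1,2,3,4::nat}. \<forall>j\<in>{0,1,2,3,4::nat}. E (f5 x0 x1 x2 x3 x4 i) (f5 x0 x1 x2 x3 x4 j) \<longleftrightarrow> F i j" by (rule adj)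
qed

lemma P5_wit:
  assumes gr: "graph V E" and fr: "P5_free V E"
    and m: "x0\<in>V" "x1\<in>V" "x2\<in>V" "x3\<in>V" "x4\<in>V"
    and d: "x0\<noteq>x1" "x0\<noteq>x2" "x0\<noteq>x3" "x0\<noteq>x4" "x1\<noteq>x2" "x1\<noteq>x3" "x1\<noteq>x4" "x2\<noteq>x3" "x2\<noteq>x4" "x3\<noteq>x4"
    and a: "E x0 x1" "\<not>E x0 x2" "\<not>E x0 x3" "\<not>E x0 x4" "E x1 x2" "\<not>E x1 x3" "\<not>E x1 x4" "E x2 x3" "\<not>E x2 x4" "E x3 x4"
  shows False
proof -
  have s: "\<And>x y. x\<in>V \<Longrightarrow> y\<in>V \<Longrightarrow> E x y \<longleftrightarrow> E y x" and irr: "\<And>x. x\<in>V \<Longrightarrow> \<not> E x x"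
    using gr unfolding graph_def by auto
  have b: "E x1 x0 = E x0 x1" "E x2 x0 = E x0 x2" "E x3 x0 = E x0 x3" "E x4 x0 = E x0 x4"
    "E x2 x1 = E x1 x2" "E x3 x1 = E x1 x3" "E x4 x1 = E x1 x4" "E x3 x2 = E x2 x3" "E x4 x2 = E x2 x4" "E x4 x3 = E x3 x4"
    using s m by blast+
  have i: "\<not> E x0 x0" "\<not> E x1 x1" "\<not> E x2 x2" "\<not> E x3 x3" "\<not> E x4 x4" using irr m by auto
  have "induced_sub {0..<5::nat} path_adj V E"
    apply (rule f5_ind[OF m d])
    by (simp add: f5_def path_adj_def a i b)
  thus False using fr unfolding P5_free_def H_free_def by simp
qed

lemma coP5_wit:
  assumes gr: "graph V E" and fr: "coP5_free V E"
    and m: "x0\<in>V" "x1\<in>V" "x2\<in>V" "x3\<in>V" "x4\<in>V"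
    and d: "x0\<noteq>x1" "x0\<noteq>x2" "x0\<noteq>x3" "x0\<noteq>x4" "x1\<noteq>x2" "x1\<noteq>x3" "x1\<noteq>x4" "x2\<noteq>x3" "x2\<noteq>x4" "x3\<noteq>x4"
    and a: "\<not>E x0 x1" "E x0 x2" "E x0 x3" "E x0 x4" "\<not>E x1 x2" "E x1 x3" "E x1 x4" "\<not>E x2 x3" "E x2 x4" "\<not>E x3 x4"
  shows False
proof -
  have s: "\<And>x y. x\<in>V \<Longrightarrow> y\<in>V \<Longrightarrow> E x y \<longleftrightarrow> E y x" and irr: "\<And>x. x\<in>V \<Longrightarrow> \<not> E x x"
    using gr unfolding graph_def by auto
  have b: "E x1 x0 = E x0 x1" "E x2 x0 = E x0 x2" "E x3 x0 = E x0 x3" "E x4 x0 = E x0 x4"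
    "E x2 x1 = E x1 x2" "E x3 x1 = E x1 x3" "E x4 x1 = E x1 x4" "E x3 x2 = E x2 x3" "E x4 x2 = E x2 x4" "E x4 x3 = E x3 x4"
    using s m by blast+
  have i: "\<not> E x0 x0" "\<not> E x1 x1" "\<not> E x2 x2" "\<not> E x3 x3" "\<not> E x4 x4" using irr m by auto
  have "induced_sub {0..<5::nat} (compl_adj path_adj) V E"
    apply (rule f5_ind[OF m d])
    by (simp add: f5_def path_adj_def compl_adj_def a i b)
  thus False using fr unfolding coP5_free_def H_free_def by simp
qed

lemma C5_wit:
  assumes gr: "graph V E" and fr: "C5_free V E"
    and m: "x0\<in>V" "x1\<in>V" "x2\<in>V" "x3\<in>V" "x4\<in>V"
    and d: "x0\<noteq>x1" "x0\<noteq>x2" "x0\<noteq>x3" "x0\<noteq>x4" "x1\<noteq>x2" "x1\<noteq>x3" "x1\<noteq>x4" "x2\<noteq>x3" "x2\<noteq>x4" "x3\<noteq>x4"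
    and a: "E x0 x1" "\<not>E x0 x2" "\<not>E x0 x3" "E x0 x4" "E x1 x2" "\<not>E x1 x3" "\<not>E x1 x4" "E x2 x3" "\<not>E x2 x4" "E x3 x4"
  shows False
proof -
  have s: "\<And>x y. x\<in>V \<Longrightarrow> y\<in>V \<Longrightarrow> E x y \<longleftrightarrow> E y x" and irr: "\<And>x. x\<in>V \<Longrightarrow> \<not> E x x"
    using gr unfolding graph_def by auto
  have b: "E x1 x0 = E x0 x1" "E x2 x0 = E x0 x2" "E x3 x0 = E x0 x3" "E x4 x0 = E x0 x4"
    "E x2 x1 = E x1 x2" "E x3 x1 = E x1 x3" "E x4 x1 = E x1 x4" "E x3 x2 = E x2 x3" "E x4 x2 = E x2 x4" "E x4 x3 = E x3 x4"
    using s m by blast+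
  have i: "\<not> E x0 x0" "\<not> E x1 x1" "\<not> E x2 x2" "\<not> E x3 x3" "\<not> E x4 x4" using irr m by auto
  have "induced_sub {0..<5::nat} (cycle_adj 5) V E"
    apply (rule f5_ind[OF m d])
    by (simp add: f5_def cycle_adj_def a i b)
  thus False using fr unfolding C5_free_def H_free_def by simp
qed




definition lab :: "('a \<Rightarrow> 'a \<Rightarrow> bool) \<Rightarrow> 'a list \<Rightarrow> 'a \<Rightarrow> bool list" where
  "lab A xs y = map (\<lambda>x. A x y) xs"

definition pick :: "'a set \<Rightarrow> ('a \<Rightarrow> 'a \<Rightarrow> bool) \<Rightarrow> 'a list \<Rightarrow> 'a" where
  "pick V A xs = (SOME y. y \<in> V - set xs \<and> (\<forall>c \<in> V - set xs. lab A xs c \<le> lab A xs y))"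

primrec lpre :: "'a set \<Rightarrow> ('a \<Rightarrow> 'a \<Rightarrow> bool) \<Rightarrow> nat \<Rightarrow> 'a list" where
  "lpre V A 0 = []"
| "lpre V A (Suc k) = lpre V A k @ [pick V A (lpre V A k)]"

lemma lex_key:
  fixes u v :: "bool list"
  assumes "u \<le> v" "length u = length v" "j < length u" "u ! j" "\<not> v ! j"
  shows "\<exists>m<j. \<not> u ! m \<and> v ! m"
proof -
  have "u \<noteq> v" using assms by auto
  with assms(1) have "(u, v) \<in> lexord {(x, y). x < y}" by (simp add: list_le_def list_less_def)
  then obtain p a b s t where ab: "(a, b) \<in> {(x::bool, y). x < y} \<or> False" and
    "u = p @ a # s \<and> v = p @ b # t \<or> (\<exists>w. v = u @ w \<and> w \<noteq> [])"
    unfolding lexord_def by fastforce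
  then consider (a) "(a,b) \<in> {(x::bool, y). x < y}" "u = p @ a # s" "v = p @ b # t" | (b) "\<exists>w. v = u @ w \<and> w \<noteq> []"
    by blast
  then show ?thesis
  proof cases
    case b then show ?thesis using assms(2) by auto
  next
    case a
    hence ab2: "\<not> a" "b" by auto
    have "length p < j \<or> length p = j \<or> length p > j" by arith
    moreover have "length p \<noteq> j" using a ab2 assms(4) by auto
    moreover have "\<not> length p > j"
    proof
      assume "length p > j"
      hence "u ! j = p ! j" "v ! j = p ! j" using a by (auto simp: nth_append)
      thus False using assms by simp
    qed
    ultimately have "length p < j" by blast
    moreover have "\<not> u ! length p" "v ! length p" using a ab2 by auto
    ultimately show ?thesis by blast
  qed
qed

lemma length_lpre[simp]: "length (lpre V A k) = k"
  by (induction k) auto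

lemma pick_spec:
  assumes "finite V" "V - set xs \<noteq> {}"
  shows "pick V A xs \<in> V - set xs \<and> (\<forall>c\<in>V - set xs. lab A xs c \<le> lab A xs (pick V A xs))"
proof -
  let ?S = "V - set xs"
  have fin: "finite (lab A xs ` ?S)" using assms by auto
  have ne: "lab A xs ` ?S \<noteq> {}" using assms by auto
  obtain y where y: "y \<in> ?S" "lab A xs y = Max (lab A xs ` ?S)" using Max_in[OF fin ne] by auto
  have "\<forall>c\<in>?S. lab A xs c \<le> lab A xs y" using y Max_ge[OF fin] by auto
  hence "\<exists>y. y \<in> ?S \<and> (\<forall>c\<in>?S. lab A xs c \<le> lab A xs y)" using y by blast
  thus ?thesis unfolding pick_def by (rule someI_ex)
qed

lemma lpre_props:
  assumes "finite V" "k \<le> card V"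
  shows "distinct (lpre V A k) \<and> set (lpre V A k) \<subseteq> V"
  using assms(2)
proof (induction k)
  case 0 then show ?case by simp
next
  case (Suc k)
  hence IH: "distinct (lpre V A k)" "set (lpre V A k) \<subseteq> V" by auto
  have "card (set (lpre V A k)) = k" using IH distinct_card by fastforce
  hence "set (lpre V A k) \<noteq> V" using Suc.prems by auto
  hence "V - set (lpre V A k) \<noteq> {}" using IH by auto
  from pick_spec[OF assms(1) this] show ?case using IH by auto
qed

lemma lpre_take: "j \<le> k \<Longrightarrow> take j (lpre V A k) = lpre V A j"
proof (induction k)
  case 0 then show ?case by simp
next
  case (Suc k)
  show ?case
  proof (cases "j \<le> k")
    case True then show ?thesis using Suc by simp
  next
    case False then have "j = Suc k" using Suc.prems by simp
    then show ?thesis by simp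
  qed
qed

lemma lpre_nth: "i < k \<Longrightarrow> lpre V A k ! i = pick V A (lpre V A i)"
proof -
  assume i: "i < k"
  have "lpre V A k ! i = take (Suc i) (lpre V A k) ! i" by simp
  also have "\<dots> = lpre V A (Suc i) ! i" using i lpre_take[of "Suc i" k V A] by simp
  also have "\<dots> = pick V A (lpre V A i)" by (simp add: nth_append)
  finally show ?thesis .
qed

lemma lexbfs_exists:
  assumes fin: "finite V"
  shows "\<exists>pos::'a \<Rightarrow> nat. inj_on pos V \<and> (\<forall>a\<in>V. \<forall>b\<in>V. \<forall>c\<in>V. pos a < pos b \<longrightarrow> pos b < pos c \<longrightarrow>
     A a c \<longrightarrow> \<not> A a b \<longrightarrow> (\<exists>d\<in>V. pos d < pos a \<and> A d b \<and> \<not> A d c))"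
proof -
  define n where "n = card V"
  define L where "L = lpre V A n"
  have dist: "distinct L" and sub: "set L \<subseteq> V" using lpre_props[OF fin, of n A] unfolding L_def n_def by auto
  have len: "length L = n" unfolding L_def by simp
  have setL: "set L = V"
    using sub dist len fin by (metis card_subset_eq distinct_card n_def)
  have bij: "bij_betw ((!) L) {..<n} V" using bij_betw_nth[OF dist] len setL by simp
  have injL: "inj_on ((!) L) {..<n}" using bij by (simp add: bij_betw_def)
  have imL: "(!) L ` {..<n} = V" using bij by (simp add: bij_betw_def)
  define pos where "pos = the_inv_into {..<n} ((!) L)"
  have posn: "\<And>y. y \<in> V \<Longrightarrow> pos y < n" unfolding pos_def using the_inv_into_into[OF injL] imL by blast
  have Lpos: "\<And>y. y \<in> V \<Longrightarrow> L ! pos y = y" unfolding pos_def using f_the_inv_into_f[OF injL] imL by blast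
  have posL: "\<And>i. i < n \<Longrightarrow> pos (L ! i) = i" unfolding pos_def using the_inv_into_f_f[OF injL] by auto
  have injpos: "inj_on pos V" by (metis Lpos inj_onI)
  have takeL: "\<And>i. i \<le> n \<Longrightarrow> take i L = lpre V A i" unfolding L_def by (rule lpre_take)
  have nthL: "\<And>i. i < n \<Longrightarrow> L ! i = pick V A (lpre V A i)" unfolding L_def by (rule lpre_nth)
  have LB: "\<exists>d\<in>V. pos d < pos a \<and> A d b \<and> \<not> A d c"
    if abc: "a\<in>V" "b\<in>V" "c\<in>V" "pos a < pos b" "pos b < pos c" "A a c" "\<not> A a b" for a b c
  proof -
    define ib where "ib = pos b"
    define xs where "xs = lpre V A ib"
    have ibn: "ib < n" using posn abc unfolding ib_def by auto
    have xsL: "xs = take ib L" using takeL ibn unfolding xs_def by simp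
    have lenxs: "length xs = ib" unfolding xs_def by simp
    have bpick: "b = pick V A xs" using nthL[OF ibn] Lpos[OF abc(2)] unfolding xs_def ib_def by simp
    have cnot: "c \<notin> set xs"
    proof
      assume "c \<in> set xs"
      then obtain k where k: "k < ib" "xs ! k = c" by (metis in_set_conv_nth lenxs)
      hence "L ! k = c" using xsL by simp
      hence "pos c = k" using posL k ibn by auto
      thus False using k abc unfolding ib_def by simp
    qed
    have "card (set xs) = ib" using lpre_props[OF fin, of ib A] ibn lenxs distinct_card unfolding xs_def n_def by fastforce
    hence "set xs \<noteq> V" using ibn n_def by auto
    moreover have "set xs \<subseteq> V" using lpre_props[OF fin, of ib A] ibn unfolding xs_def n_def by auto
    ultimately have ne: "V - set xs \<noteq> {}" by auto
    have cle: "lab A xs c \<le> lab A xs b" using pick_spec[OF fin ne] cnot abc(3) bpick by auto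
    have ia: "pos a < ib" using abc unfolding ib_def by simp
    have xa: "xs ! pos a = a" using xsL ia Lpos[OF abc(1)] by simp
    have "lab A xs c ! pos a" "\<not> lab A xs b ! pos a" using xa ia lenxs abc unfolding lab_def by auto
    then obtain m where m: "m < pos a" "\<not> lab A xs c ! m" "lab A xs b ! m"
      using lex_key[OF cle _ _] ia lenxs unfolding lab_def by (metis length_map)
    have mib: "m < ib" using m ia by simp
    have xm: "xs ! m = L ! m" using xsL mib by simp
    have "L ! m \<in> V" using setL len mib ibn by auto
    moreover have "pos (L ! m) = m" using posL mib ibn by simp
    moreover have "A (L ! m) b" "\<not> A (L ! m) c" using m xm mib lenxs unfolding lab_def by auto
    ultimately show ?thesis using m by metis
  qed
  show ?thesis using injpos LB by blast
qed




lemma sym_lem: assumes "graph V E" shows "\<And>x y. x\<in>V \<Longrightarrow> y\<in>V \<Longrightarrow> E x y \<Longrightarrow> E y x"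
  using assms unfolding graph_def by blast
lemma nsym_lem: assumes "graph V E" shows "\<And>x y. x\<in>V \<Longrightarrow> y\<in>V \<Longrightarrow> \<not> E x y \<Longrightarrow> \<not> E y x"
  using assms unfolding graph_def by blast
lemma lt_flip: "inj_on pos V \<Longrightarrow> x\<in>V \<Longrightarrow> y\<in>V \<Longrightarrow> x \<noteq> y \<Longrightarrow> \<not> pos x < pos y \<Longrightarrow> pos y < (pos x::nat)"
  by (metis inj_onD linorder_neqE_nat)

lemma descent_step:
  fixes V :: "'a set" and E :: "'a \<Rightarrow> 'a \<Rightarrow> bool" and pos :: "'a \<Rightarrow> nat"
  assumes gr: "graph V E" and P5f: "P5_free V E" and coP5f: "coP5_free V E" and C5f: "C5_free V E"
    and inj: "inj_on pos V"
    and LB: "\<And>a b c. a\<in>V \<Longrightarrow> b\<in>V \<Longrightarrow> c\<in>V \<Longrightarrow> pos a < pos b \<Longrightarrow> pos b < pos c \<Longrightarrow> \<not>E a c \<Longrightarrow> E a b \<Longrightarrow> \<exists>d\<in>V. pos d < pos a \<and> \<not>E d b \<and> E d c"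
    and zV: "z \<in> V" and zmax: "\<And>x. x \<in> V \<Longrightarrow> pos x \<le> pos z"
    and IH: "\<And>p' q' r'. pos p' + pos q' + pos r' < pos p + pos q + pos r \<Longrightarrow> p'\<in>V \<Longrightarrow> q'\<in>V \<Longrightarrow> r'\<in>V \<Longrightarrow> E z r' \<Longrightarrow> E r' p' \<Longrightarrow> E p' q' \<Longrightarrow> \<not>E z p' \<Longrightarrow> \<not>E z q' \<Longrightarrow> \<not>E r' q' \<Longrightarrow> False"
    and pV: "p\<in>V" and qV: "q\<in>V" and rV: "r\<in>V"
    and e_zr: "E z r" and e_rp: "E r p" and e_pq: "E p q" and n_zp: "\<not>E z p" and n_zq: "\<not>E z q" and n_rq: "\<not>E r q"
  shows False
proof -
  note sym = sym_lem[OF gr] and nsym = nsym_lem[OF gr]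
  have irr: "\<And>x. x\<in>V \<Longrightarrow> \<not> E x x" using gr unfolding graph_def by blast
  have d_pq: "p \<noteq> q" using e_pq irr pV by auto
  have d_pr: "p \<noteq> r" using e_rp irr pV by auto
  have d_qr: "q \<noteq> r" using e_zr n_zq by auto
  have d_pz: "p \<noteq> z" using e_pq n_zq by auto
  have d_qz: "q \<noteq> z" using e_pq n_zp sym[OF pV qV] by auto
  have d_rz: "r \<noteq> z" using e_zr irr rV by auto
  note d_pq' = not_sym[OF d_pq] and d_pr' = not_sym[OF d_pr] and d_qr' = not_sym[OF d_qr]
  note d_pz' = not_sym[OF d_pz] and d_qz' = not_sym[OF d_qz] and d_rz' = not_sym[OF d_rz]
  have oz_p: "pos p < pos z" using zmax[OF pV] inj pV zV d_pz by (metis inj_onD order_le_neq_trans)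
  have oz_q: "pos q < pos z" using zmax[OF qV] inj qV zV d_qz by (metis inj_onD order_le_neq_trans)
  have oz_r: "pos r < pos z" using zmax[OF rV] inj rV zV d_rz by (metis inj_onD order_le_neq_trans)
  have a1: "E r z" using sym[OF zV rV e_zr] .
  have a2: "E p r" using sym[OF rV pV e_rp] .
  have a3: "E q p" using sym[OF pV qV e_pq] .
  have a4: "\<not> E p z" using nsym[OF zV pV n_zp] .
  have a5: "\<not> E q z" using nsym[OF zV qV n_zq] .
  have a6: "\<not> E q r" using nsym[OF rV qV n_rq] .
  show False
  proof (cases "pos p < pos q")
    case True
    note opq = True
    show False
    proof (cases "pos q < pos r")
      case True
      note oqr = True
      show False
      proof (cases "pos p < pos r")
        case True
        note opr = True
        have o7: "pos p < pos q" using oz_p oz_q oz_r opq oqr opr by linarith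
        have o8: "pos q < pos z" using oz_p oz_q oz_r opq oqr opr by linarith
        obtain d4 where m9: "d4 \<in> V" and o10: "pos d4 < pos p" and a11: "\<not> E d4 q" and a12: "E d4 z"
          using LB[OF pV qV zV o7 o8 a4 e_pq] by blast
        have a13: "\<not> E q d4" using nsym[OF m9 qV a11] .
        have a14: "E z d4" using sym[OF m9 zV a12] .
        have o16: "pos d4 < pos p" using oz_p oz_q oz_r opq oqr opr o10 by linarith
        have n15: "d4 \<noteq> p" using o16 by auto
        have n17: "p \<noteq> d4" using n15 by simp
        have o19: "pos d4 < pos q" using oz_p oz_q oz_r opq oqr opr o10 by linarith
        have n18: "d4 \<noteq> q" using o19 by auto
        have n20: "q \<noteq> d4" using n18 by simp
        have o22: "pos d4 < pos r" using oz_p oz_q oz_r opq oqr opr o10 by linarith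
        have n21: "d4 \<noteq> r" using o22 by auto
        have n23: "r \<noteq> d4" using n21 by simp
        have o25: "pos d4 < pos z" using oz_p oz_q oz_r opq oqr opr o10 by linarith
        have n24: "d4 \<noteq> z" using o25 by auto
        have n26: "z \<noteq> d4" using n24 by simp
        show False
        proof (cases "E d4 p")
          case True
          note a27 = True
          have a28: "E p d4" using sym[OF m9 pV a27] .
          show False
          proof (cases "E d4 r")
            case True
            note a29 = True
            have a30: "E r d4" using sym[OF m9 rV a29] .
            have sm: "pos p + pos q + pos d4 < pos p + pos q + pos r" using oz_p oz_q oz_r opq oqr opr o10 by linarith
            show False by (rule IH[OF sm pV qV m9 a14 a27 e_pq n_zp n_zq a11])
          next
            case False
            note a29 = False
            have a30: "\<not> E r d4" using nsym[OF m9 rV a29] .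
            have sm: "pos p + pos q + pos d4 < pos p + pos q + pos r" using oz_p oz_q oz_r opq oqr opr o10 by linarith
            show False by (rule IH[OF sm pV qV m9 a14 a27 e_pq n_zp n_zq a11])
          qed
        next
          case False
          note a27 = False
          have a28: "\<not> E p d4" using nsym[OF m9 pV a27] .
          show False
          proof (cases "E d4 r")
            case True
            note a29 = True
            have a30: "E r d4" using sym[OF m9 rV a29] .
            have o31: "pos p < pos r" using oz_p oz_q oz_r opq oqr opr o10 by linarith
            have o32: "pos r < pos z" using oz_p oz_q oz_r opq oqr opr o10 by linarith
            obtain d5 where m33: "d5 \<in> V" and o34: "pos d5 < pos p" and a35: "\<not> E d5 r" and a36: "E d5 z"
              using LB[OF pV rV zV o31 o32 a4 a2] by blast
            have a37: "\<not> E r d5" using nsym[OF m33 rV a35] .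
            have a38: "E z d5" using sym[OF m33 zV a36] .
            have n39: "d5 \<noteq> d4" using a35 a29 by auto
            have n40: "d4 \<noteq> d5" using n39 by simp
            have o42: "pos d5 < pos p" using oz_p oz_q oz_r opq oqr opr o10 o34 by linarith
            have n41: "d5 \<noteq> p" using o42 by auto
            have n43: "p \<noteq> d5" using n41 by simp
            have o45: "pos d5 < pos q" using oz_p oz_q oz_r opq oqr opr o10 o34 by linarith
            have n44: "d5 \<noteq> q" using o45 by auto
            have n46: "q \<noteq> d5" using n44 by simp
            have o48: "pos d5 < pos r" using oz_p oz_q oz_r opq oqr opr o10 o34 by linarith
            have n47: "d5 \<noteq> r" using o48 by auto
            have n49: "r \<noteq> d5" using n47 by simp
            have o51: "pos d5 < pos z" using oz_p oz_q oz_r opq oqr opr o10 o34 by linarith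
            have n50: "d5 \<noteq> z" using o51 by auto
            have n52: "z \<noteq> d5" using n50 by simp
            show False
            proof (cases "pos d5 < pos d4")
              case True
              note o53 = True
              show False
              proof (cases "E d5 d4")
                case True
                note a54 = True
                have a55: "E d4 d5" using sym[OF m33 m9 a54] .
                show False
                proof (cases "E d5 p")
                  case True
                  note a56 = True
                  have a57: "E p d5" using sym[OF m33 pV a56] .
                  show False
                  proof (cases "E d5 q")
                    case True
                    note a58 = True
                    have a59: "E q d5" using sym[OF m33 qV a58] .
                    show False by (rule coP5_wit[OF gr coP5f pV m9 qV rV m33 n17 d_pq d_pr n43 n18 n21 n40 d_qr n46 n49 a28 e_pq a2 a57 a11 a29 a55 a6 a59 a37])
                  next
                    case False
                    note a58 = False
                    have a59: "\<not> E q d5" using nsym[OF m33 qV a58] .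
                    have sm: "pos p + pos q + pos d5 < pos p + pos q + pos r" using oz_p oz_q oz_r opq oqr opr o10 o34 o53 by linarith
                    show False by (rule IH[OF sm pV qV m33 a38 a56 e_pq n_zp n_zq a58])
                  qed
                next
                  case False
                  note a56 = False
                  have a57: "\<not> E p d5" using nsym[OF m33 pV a56] .
                  show False
                  proof (cases "E d5 q")
                    case True
                    note a58 = True
                    have a59: "E q d5" using sym[OF m33 qV a58] .
                    show False by (rule C5_wit[OF gr C5f m9 rV pV qV m33 n21 n15 n18 n40 d_pr' d_qr' n49 d_pq n43 n46 a29 a27 a11 a55 e_rp n_rq a37 e_pq a57 a59])
                  next
                    case False
                    note a58 = False
                    have a59: "\<not> E q d5" using nsym[OF m33 qV a58] .
                    show False by (rule P5_wit[OF gr P5f qV pV rV m9 m33 d_pq' d_qr n20 n46 d_pr n17 n43 n23 n49 n40 a3 a6 a13 a59 a2 a28 a57 a30 a37 a55])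
                  qed
                qed
              next
                case False
                note a54 = False
                have a55: "\<not> E d4 d5" using nsym[OF m33 m9 a54] .
                show False
                proof (cases "E d5 p")
                  case True
                  note a56 = True
                  have a57: "E p d5" using sym[OF m33 pV a56] .
                  show False by (rule coP5_wit[OF gr coP5f rV m33 m9 pV zV n49 n23 d_pr' d_rz n39 n41 n50 n15 n24 d_pz a37 a30 e_rp a1 a54 a56 a36 a27 a12 a4])
                next
                  case False
                  note a56 = False
                  have a57: "\<not> E p d5" using nsym[OF m33 pV a56] .
                  show False
                  proof (cases "E d5 q")
                    case True
                    note a58 = True
                    have a59: "E q d5" using sym[OF m33 qV a58] .
                    show False by (rule P5_wit[OF gr P5f m9 rV pV qV m33 n21 n15 n18 n40 d_pr' d_qr' n49 d_pq n43 n46 a29 a27 a11 a55 e_rp n_rq a37 e_pq a57 a59])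
                  next
                    case False
                    note a58 = False
                    have a59: "\<not> E q d5" using nsym[OF m33 qV a58] .
                    show False by (rule P5_wit[OF gr P5f qV pV rV zV m33 d_pq' d_qr d_qz n46 d_pr d_pz n43 d_rz n49 n52 a3 a6 a5 a59 a2 a4 a57 a1 a37 a38])
                  qed
                qed
              qed
            next
              case False
              have o53: "pos d4 < pos d5" by (rule lt_flip[OF inj m33 m9 n39 False])
              show False
              proof (cases "E d5 d4")
                case True
                note a54 = True
                have a55: "E d4 d5" using sym[OF m33 m9 a54] .
                show False
                proof (cases "E d5 p")
                  case True
                  note a56 = True
                  have a57: "E p d5" using sym[OF m33 pV a56] .
                  show False
                  proof (cases "E d5 q")
                    case True
                    note a58 = True
                    have a59: "E q d5" using sym[OF m33 qV a58] .
                    show False by (rule coP5_wit[OF gr coP5f pV m9 qV rV m33 n17 d_pq d_pr n43 n18 n21 n40 d_qr n46 n49 a28 e_pq a2 a57 a11 a29 a55 a6 a59 a37])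
                  next
                    case False
                    note a58 = False
                    have a59: "\<not> E q d5" using nsym[OF m33 qV a58] .
                    have sm: "pos p + pos q + pos d5 < pos p + pos q + pos r" using oz_p oz_q oz_r opq oqr opr o10 o34 o53 by linarith
                    show False by (rule IH[OF sm pV qV m33 a38 a56 e_pq n_zp n_zq a58])
                  qed
                next
                  case False
                  note a56 = False
                  have a57: "\<not> E p d5" using nsym[OF m33 pV a56] .
                  show False
                  proof (cases "E d5 q")
                    case True
                    note a58 = True
                    have a59: "E q d5" using sym[OF m33 qV a58] .
                    show False by (rule C5_wit[OF gr C5f m9 rV pV qV m33 n21 n15 n18 n40 d_pr' d_qr' n49 d_pq n43 n46 a29 a27 a11 a55 e_rp n_rq a37 e_pq a57 a59])
                  next
                    case False
                    note a58 = False
                    have a59: "\<not> E q d5" using nsym[OF m33 qV a58] .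
                    show False by (rule P5_wit[OF gr P5f qV pV rV m9 m33 d_pq' d_qr n20 n46 d_pr n17 n43 n23 n49 n40 a3 a6 a13 a59 a2 a28 a57 a30 a37 a55])
                  qed
                qed
              next
                case False
                note a54 = False
                have a55: "\<not> E d4 d5" using nsym[OF m33 m9 a54] .
                show False
                proof (cases "E d5 p")
                  case True
                  note a56 = True
                  have a57: "E p d5" using sym[OF m33 pV a56] .
                  show False by (rule coP5_wit[OF gr coP5f rV m33 m9 pV zV n49 n23 d_pr' d_rz n39 n41 n50 n15 n24 d_pz a37 a30 e_rp a1 a54 a56 a36 a27 a12 a4])
                next
                  case False
                  note a56 = False
                  have a57: "\<not> E p d5" using nsym[OF m33 pV a56] .
                  show False
                  proof (cases "E d5 q")
                    case True
                    note a58 = True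
                    have a59: "E q d5" using sym[OF m33 qV a58] .
                    show False by (rule P5_wit[OF gr P5f m9 rV pV qV m33 n21 n15 n18 n40 d_pr' d_qr' n49 d_pq n43 n46 a29 a27 a11 a55 e_rp n_rq a37 e_pq a57 a59])
                  next
                    case False
                    note a58 = False
                    have a59: "\<not> E q d5" using nsym[OF m33 qV a58] .
                    show False by (rule P5_wit[OF gr P5f qV pV rV zV m33 d_pq' d_qr d_qz n46 d_pr d_pz n43 d_rz n49 n52 a3 a6 a5 a59 a2 a4 a57 a1 a37 a38])
                  qed
                qed
              qed
            qed
          next
            case False
            note a29 = False
            have a30: "\<not> E r d4" using nsym[OF m9 rV a29] .
            show False by (rule P5_wit[OF gr P5f qV pV rV zV m9 d_pq' d_qr d_qz n20 d_pr d_pz n17 d_rz n23 n26 a3 a6 a5 a13 a2 a4 a28 a1 a30 a14])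
          qed
        qed
      next
        case False
        note opr = lt_flip[OF inj pV rV d_pr False]
        show False using opq oqr opr by linarith
      qed
    next
      case False
      note oqr = lt_flip[OF inj qV rV d_qr False]
      show False
      proof (cases "pos p < pos r")
        case True
        note opr = True
        have o7: "pos p < pos r" using oz_p oz_q oz_r opq oqr opr by linarith
        have o8: "pos r < pos z" using oz_p oz_q oz_r opq oqr opr by linarith
        obtain d4 where m9: "d4 \<in> V" and o10: "pos d4 < pos p" and a11: "\<not> E d4 r" and a12: "E d4 z"
          using LB[OF pV rV zV o7 o8 a4 a2] by blast
        have a13: "\<not> E r d4" using nsym[OF m9 rV a11] .
        have a14: "E z d4" using sym[OF m9 zV a12] .
        have o16: "pos d4 < pos p" using oz_p oz_q oz_r opq oqr opr o10 by linarith
        have n15: "d4 \<noteq> p" using o16 by auto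
        have n17: "p \<noteq> d4" using n15 by simp
        have o19: "pos d4 < pos r" using oz_p oz_q oz_r opq oqr opr o10 by linarith
        have n18: "d4 \<noteq> r" using o19 by auto
        have n20: "r \<noteq> d4" using n18 by simp
        have o22: "pos d4 < pos q" using oz_p oz_q oz_r opq oqr opr o10 by linarith
        have n21: "d4 \<noteq> q" using o22 by auto
        have n23: "q \<noteq> d4" using n21 by simp
        have o25: "pos d4 < pos z" using oz_p oz_q oz_r opq oqr opr o10 by linarith
        have n24: "d4 \<noteq> z" using o25 by auto
        have n26: "z \<noteq> d4" using n24 by simp
        show False
        proof (cases "E d4 p")
          case True
          note a27 = True
          have a28: "E p d4" using sym[OF m9 pV a27] .
          show False
          proof (cases "E d4 q")
            case True
            note a29 = True
            have a30: "E q d4" using sym[OF m9 qV a29] .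
            show False by (rule coP5_wit[OF gr coP5f pV zV qV rV m9 d_pz d_pq d_pr n17 d_qz' d_rz' n26 d_qr n23 n20 a4 e_pq a2 a28 n_zq e_zr a14 a6 a30 a13])
          next
            case False
            note a29 = False
            have a30: "\<not> E q d4" using nsym[OF m9 qV a29] .
            have sm: "pos p + pos q + pos d4 < pos p + pos q + pos r" using oz_p oz_q oz_r opq oqr opr o10 by linarith
            show False by (rule IH[OF sm pV qV m9 a14 a27 e_pq n_zp n_zq a29])
          qed
        next
          case False
          note a27 = False
          have a28: "\<not> E p d4" using nsym[OF m9 pV a27] .
          show False
          proof (cases "E d4 q")
            case True
            note a29 = True
            have a30: "E q d4" using sym[OF m9 qV a29] .
            show False by (rule C5_wit[OF gr C5f pV rV zV m9 qV d_pr d_pz n17 d_pq d_rz n20 d_qr' n26 d_qz' n21 a2 a4 a28 e_pq a1 a13 n_rq a14 n_zq a29])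
          next
            case False
            note a29 = False
            have a30: "\<not> E q d4" using nsym[OF m9 qV a29] .
            show False by (rule P5_wit[OF gr P5f qV pV rV zV m9 d_pq' d_qr d_qz n23 d_pr d_pz n17 d_rz n20 n26 a3 a6 a5 a30 a2 a4 a28 a1 a13 a14])
          qed
        qed
      next
        case False
        note opr = lt_flip[OF inj pV rV d_pr False]
        have o7: "pos r < pos p" using oz_p oz_q oz_r opq oqr opr by linarith
        have o8: "pos p < pos q" using oz_p oz_q oz_r opq oqr opr by linarith
        obtain d4 where m9: "d4 \<in> V" and o10: "pos d4 < pos r" and a11: "\<not> E d4 p" and a12: "E d4 q"
          using LB[OF rV pV qV o7 o8 n_rq e_rp] by blast
        have a13: "\<not> E p d4" using nsym[OF m9 pV a11] .
        have a14: "E q d4" using sym[OF m9 qV a12] .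
        have o16: "pos d4 < pos r" using oz_p oz_q oz_r opq oqr opr o10 by linarith
        have n15: "d4 \<noteq> r" using o16 by auto
        have n17: "r \<noteq> d4" using n15 by simp
        have o19: "pos d4 < pos p" using oz_p oz_q oz_r opq oqr opr o10 by linarith
        have n18: "d4 \<noteq> p" using o19 by auto
        have n20: "p \<noteq> d4" using n18 by simp
        have o22: "pos d4 < pos q" using oz_p oz_q oz_r opq oqr opr o10 by linarith
        have n21: "d4 \<noteq> q" using o22 by auto
        have n23: "q \<noteq> d4" using n21 by simp
        have o25: "pos d4 < pos z" using oz_p oz_q oz_r opq oqr opr o10 by linarith
        have n24: "d4 \<noteq> z" using o25 by auto
        have n26: "z \<noteq> d4" using n24 by simp
        show False
        proof (cases "E d4 r")
          case True
          note a27 = True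
          have a28: "E r d4" using sym[OF m9 rV a27] .
          show False
          proof (cases "E d4 z")
            case True
            note a29 = True
            have a30: "E z d4" using sym[OF m9 zV a29] .
            show False by (rule coP5_wit[OF gr coP5f rV qV zV pV m9 d_qr' d_rz d_pr' n17 d_qz d_pq' n23 d_pz' n26 n20 n_rq a1 e_rp a28 a5 a3 a14 n_zp a30 a13])
          next
            case False
            note a29 = False
            have a30: "\<not> E z d4" using nsym[OF m9 zV a29] .
            have sm: "pos d4 + pos q + pos r < pos p + pos q + pos r" using oz_p oz_q oz_r opq oqr opr o10 by linarith
            show False by (rule IH[OF sm m9 qV rV e_zr a28 a12 a30 n_zq n_rq])
          qed
        next
          case False
          note a27 = False
          have a28: "\<not> E r d4" using nsym[OF m9 rV a27] .
          show False
          proof (cases "E d4 z")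
            case True
            note a29 = True
            have a30: "E z d4" using sym[OF m9 zV a29] .
            show False by (rule C5_wit[OF gr C5f rV pV qV m9 zV d_pr' d_qr' n17 d_rz d_pq n20 d_pz n23 d_qz n24 e_rp n_rq a28 a1 e_pq a13 a4 a14 a5 a29])
          next
            case False
            note a29 = False
            have a30: "\<not> E z d4" using nsym[OF m9 zV a29] .
            show False by (rule P5_wit[OF gr P5f zV rV pV qV m9 d_rz' d_pz' d_qz' n26 d_pr' d_qr' n17 d_pq n20 n23 e_zr n_zp n_zq a30 e_rp n_rq a28 e_pq a13 a14])
          qed
        qed
      qed
    qed
  next
    case False
    note opq = lt_flip[OF inj pV qV d_pq False]
    show False
    proof (cases "pos q < pos r")
      case True
      note oqr = True
      show False
      proof (cases "pos p < pos r")
        case True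
        note opr = True
        have o7: "pos q < pos p" using oz_p oz_q oz_r opq oqr opr by linarith
        have o8: "pos p < pos r" using oz_p oz_q oz_r opq oqr opr by linarith
        obtain d4 where m9: "d4 \<in> V" and o10: "pos d4 < pos q" and a11: "\<not> E d4 p" and a12: "E d4 r"
          using LB[OF qV pV rV o7 o8 a6 a3] by blast
        have a13: "\<not> E p d4" using nsym[OF m9 pV a11] .
        have a14: "E r d4" using sym[OF m9 rV a12] .
        have o16: "pos d4 < pos q" using oz_p oz_q oz_r opq oqr opr o10 by linarith
        have n15: "d4 \<noteq> q" using o16 by auto
        have n17: "q \<noteq> d4" using n15 by simp
        have o19: "pos d4 < pos p" using oz_p oz_q oz_r opq oqr opr o10 by linarith
        have n18: "d4 \<noteq> p" using o19 by auto
        have n20: "p \<noteq> d4" using n18 by simp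
        have o22: "pos d4 < pos r" using oz_p oz_q oz_r opq oqr opr o10 by linarith
        have n21: "d4 \<noteq> r" using o22 by auto
        have n23: "r \<noteq> d4" using n21 by simp
        have o25: "pos d4 < pos z" using oz_p oz_q oz_r opq oqr opr o10 by linarith
        have n24: "d4 \<noteq> z" using o25 by auto
        have n26: "z \<noteq> d4" using n24 by simp
        show False
        proof (cases "E d4 q")
          case True
          note a27 = True
          have a28: "E q d4" using sym[OF m9 qV a27] .
          show False
          proof (cases "E d4 z")
            case True
            note a29 = True
            have a30: "E z d4" using sym[OF m9 zV a29] .
            show False by (rule coP5_wit[OF gr coP5f rV qV zV pV m9 d_qr' d_rz d_pr' n23 d_qz d_pq' n17 d_pz' n26 n20 n_rq a1 e_rp a14 a5 a3 a28 n_zp a30 a13])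
          next
            case False
            note a29 = False
            have a30: "\<not> E z d4" using nsym[OF m9 zV a29] .
            have sm: "pos d4 + pos q + pos r < pos p + pos q + pos r" using oz_p oz_q oz_r opq oqr opr o10 by linarith
            show False by (rule IH[OF sm m9 qV rV e_zr a14 a27 a30 n_zq n_rq])
          qed
        next
          case False
          note a27 = False
          have a28: "\<not> E q d4" using nsym[OF m9 qV a27] .
          show False
          proof (cases "E d4 z")
            case True
            note a29 = True
            have a30: "E z d4" using sym[OF m9 zV a29] .
            have o31: "pos p < pos r" using oz_p oz_q oz_r opq oqr opr o10 by linarith
            have o32: "pos r < pos z" using oz_p oz_q oz_r opq oqr opr o10 by linarith
            obtain d5 where m33: "d5 \<in> V" and o34: "pos d5 < pos p" and a35: "\<not> E d5 r" and a36: "E d5 z"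
              using LB[OF pV rV zV o31 o32 a4 a2] by blast
            have a37: "\<not> E r d5" using nsym[OF m33 rV a35] .
            have a38: "E z d5" using sym[OF m33 zV a36] .
            have n39: "d5 \<noteq> d4" using a35 a12 by auto
            have n40: "d4 \<noteq> d5" using n39 by simp
            have n41: "d5 \<noteq> q" using a36 a5 by auto
            have n42: "q \<noteq> d5" using n41 by simp
            have o44: "pos d5 < pos p" using oz_p oz_q oz_r opq oqr opr o10 o34 by linarith
            have n43: "d5 \<noteq> p" using o44 by auto
            have n45: "p \<noteq> d5" using n43 by simp
            have o47: "pos d5 < pos r" using oz_p oz_q oz_r opq oqr opr o10 o34 by linarith
            have n46: "d5 \<noteq> r" using o47 by auto
            have n48: "r \<noteq> d5" using n46 by simp
            have o50: "pos d5 < pos z" using oz_p oz_q oz_r opq oqr opr o10 o34 by linarith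
            have n49: "d5 \<noteq> z" using o50 by auto
            have n51: "z \<noteq> d5" using n49 by simp
            show False
            proof (cases "pos d5 < pos d4")
              case True
              note o52 = True
              show False
              proof (cases "E d5 d4")
                case True
                note a53 = True
                have a54: "E d4 d5" using sym[OF m33 m9 a53] .
                show False
                proof (cases "E d5 q")
                  case True
                  note a55 = True
                  have a56: "E q d5" using sym[OF m33 qV a55] .
                  show False
                  proof (cases "E d5 p")
                    case True
                    note a57 = True
                    have a58: "E p d5" using sym[OF m33 pV a57] .
                    show False by (rule coP5_wit[OF gr coP5f pV m9 qV rV m33 n20 d_pq d_pr n45 n15 n21 n40 d_qr n42 n48 a13 e_pq a2 a58 a27 a12 a54 a6 a56 a37])
                  next
                    case False
                    note a57 = False
                    have a58: "\<not> E p d5" using nsym[OF m33 pV a57] .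
                    show False by (rule C5_wit[OF gr C5f m9 rV pV qV m33 n21 n18 n15 n40 d_pr' d_qr' n48 d_pq n45 n42 a12 a11 a27 a54 e_rp n_rq a37 e_pq a58 a56])
                  qed
                next
                  case False
                  note a55 = False
                  have a56: "\<not> E q d5" using nsym[OF m33 qV a55] .
                  show False
                  proof (cases "E d5 p")
                    case True
                    note a57 = True
                    have a58: "E p d5" using sym[OF m33 pV a57] .
                    have sm: "pos p + pos q + pos d5 < pos p + pos q + pos r" using oz_p oz_q oz_r opq oqr opr o10 o34 o52 by linarith
                    show False by (rule IH[OF sm pV qV m33 a38 a57 e_pq n_zp n_zq a55])
                  next
                    case False
                    note a57 = False
                    have a58: "\<not> E p d5" using nsym[OF m33 pV a57] .
                    show False by (rule P5_wit[OF gr P5f qV pV rV m9 m33 d_pq' d_qr n17 n42 d_pr n20 n45 n23 n48 n40 a3 a6 a28 a56 a2 a13 a58 a14 a37 a54])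
                  qed
                qed
              next
                case False
                note a53 = False
                have a54: "\<not> E d4 d5" using nsym[OF m33 m9 a53] .
                show False
                proof (cases "E d5 p")
                  case True
                  note a55 = True
                  have a56: "E p d5" using sym[OF m33 pV a55] .
                  show False by (rule coP5_wit[OF gr coP5f rV m33 m9 pV zV n48 n23 d_pr' d_rz n39 n43 n49 n18 n24 d_pz a37 a14 e_rp a1 a53 a55 a36 a11 a29 a4])
                next
                  case False
                  note a55 = False
                  have a56: "\<not> E p d5" using nsym[OF m33 pV a55] .
                  show False
                  proof (cases "E d5 q")
                    case True
                    note a57 = True
                    have a58: "E q d5" using sym[OF m33 qV a57] .
                    show False by (rule P5_wit[OF gr P5f m9 rV pV qV m33 n21 n18 n15 n40 d_pr' d_qr' n48 d_pq n45 n42 a12 a11 a27 a54 e_rp n_rq a37 e_pq a56 a58])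
                  next
                    case False
                    note a57 = False
                    have a58: "\<not> E q d5" using nsym[OF m33 qV a57] .
                    show False by (rule P5_wit[OF gr P5f qV pV rV zV m33 d_pq' d_qr d_qz n42 d_pr d_pz n45 d_rz n48 n51 a3 a6 a5 a58 a2 a4 a56 a1 a37 a38])
                  qed
                qed
              qed
            next
              case False
              have o52: "pos d4 < pos d5" by (rule lt_flip[OF inj m33 m9 n39 False])
              show False
              proof (cases "pos d5 < pos q")
                case True
                note o53 = True
                show False
                proof (cases "E d5 d4")
                  case True
                  note a54 = True
                  have a55: "E d4 d5" using sym[OF m33 m9 a54] .
                  show False
                  proof (cases "E d5 q")
                    case True
                    note a56 = True
                    have a57: "E q d5" using sym[OF m33 qV a56] .
                    show False
                    proof (cases "E d5 p")
                      case True
                      note a58 = True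
                      have a59: "E p d5" using sym[OF m33 pV a58] .
                      show False by (rule coP5_wit[OF gr coP5f pV m9 qV rV m33 n20 d_pq d_pr n45 n15 n21 n40 d_qr n42 n48 a13 e_pq a2 a59 a27 a12 a55 a6 a57 a37])
                    next
                      case False
                      note a58 = False
                      have a59: "\<not> E p d5" using nsym[OF m33 pV a58] .
                      show False by (rule C5_wit[OF gr C5f m9 rV pV qV m33 n21 n18 n15 n40 d_pr' d_qr' n48 d_pq n45 n42 a12 a11 a27 a55 e_rp n_rq a37 e_pq a59 a57])
                    qed
                  next
                    case False
                    note a56 = False
                    have a57: "\<not> E q d5" using nsym[OF m33 qV a56] .
                    show False
                    proof (cases "E d5 p")
                      case True
                      note a58 = True
                      have a59: "E p d5" using sym[OF m33 pV a58] .
                      have sm: "pos p + pos q + pos d5 < pos p + pos q + pos r" using oz_p oz_q oz_r opq oqr opr o10 o34 o52 o53 by linarith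
                      show False by (rule IH[OF sm pV qV m33 a38 a58 e_pq n_zp n_zq a56])
                    next
                      case False
                      note a58 = False
                      have a59: "\<not> E p d5" using nsym[OF m33 pV a58] .
                      show False by (rule P5_wit[OF gr P5f qV pV rV m9 m33 d_pq' d_qr n17 n42 d_pr n20 n45 n23 n48 n40 a3 a6 a28 a57 a2 a13 a59 a14 a37 a55])
                    qed
                  qed
                next
                  case False
                  note a54 = False
                  have a55: "\<not> E d4 d5" using nsym[OF m33 m9 a54] .
                  show False
                  proof (cases "E d5 p")
                    case True
                    note a56 = True
                    have a57: "E p d5" using sym[OF m33 pV a56] .
                    show False by (rule coP5_wit[OF gr coP5f rV m33 m9 pV zV n48 n23 d_pr' d_rz n39 n43 n49 n18 n24 d_pz a37 a14 e_rp a1 a54 a56 a36 a11 a29 a4])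
                  next
                    case False
                    note a56 = False
                    have a57: "\<not> E p d5" using nsym[OF m33 pV a56] .
                    show False
                    proof (cases "E d5 q")
                      case True
                      note a58 = True
                      have a59: "E q d5" using sym[OF m33 qV a58] .
                      show False by (rule P5_wit[OF gr P5f m9 rV pV qV m33 n21 n18 n15 n40 d_pr' d_qr' n48 d_pq n45 n42 a12 a11 a27 a55 e_rp n_rq a37 e_pq a57 a59])
                    next
                      case False
                      note a58 = False
                      have a59: "\<not> E q d5" using nsym[OF m33 qV a58] .
                      show False by (rule P5_wit[OF gr P5f qV pV rV zV m33 d_pq' d_qr d_qz n42 d_pr d_pz n45 d_rz n48 n51 a3 a6 a5 a59 a2 a4 a57 a1 a37 a38])
                    qed
                  qed
                qed
              next
                case False
                have o53: "pos q < pos d5" by (rule lt_flip[OF inj m33 qV n41 False])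
                show False
                proof (cases "E d5 d4")
                  case True
                  note a54 = True
                  have a55: "E d4 d5" using sym[OF m33 m9 a54] .
                  show False
                  proof (cases "E d5 q")
                    case True
                    note a56 = True
                    have a57: "E q d5" using sym[OF m33 qV a56] .
                    show False
                    proof (cases "E d5 p")
                      case True
                      note a58 = True
                      have a59: "E p d5" using sym[OF m33 pV a58] .
                      show False by (rule coP5_wit[OF gr coP5f pV m9 qV rV m33 n20 d_pq d_pr n45 n15 n21 n40 d_qr n42 n48 a13 e_pq a2 a59 a27 a12 a55 a6 a57 a37])
                    next
                      case False
                      note a58 = False
                      have a59: "\<not> E p d5" using nsym[OF m33 pV a58] .
                      show False by (rule C5_wit[OF gr C5f m9 rV pV qV m33 n21 n18 n15 n40 d_pr' d_qr' n48 d_pq n45 n42 a12 a11 a27 a55 e_rp n_rq a37 e_pq a59 a57])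
                    qed
                  next
                    case False
                    note a56 = False
                    have a57: "\<not> E q d5" using nsym[OF m33 qV a56] .
                    show False
                    proof (cases "E d5 p")
                      case True
                      note a58 = True
                      have a59: "E p d5" using sym[OF m33 pV a58] .
                      have sm: "pos p + pos q + pos d5 < pos p + pos q + pos r" using oz_p oz_q oz_r opq oqr opr o10 o34 o52 o53 by linarith
                      show False by (rule IH[OF sm pV qV m33 a38 a58 e_pq n_zp n_zq a56])
                    next
                      case False
                      note a58 = False
                      have a59: "\<not> E p d5" using nsym[OF m33 pV a58] .
                      show False by (rule P5_wit[OF gr P5f qV pV rV m9 m33 d_pq' d_qr n17 n42 d_pr n20 n45 n23 n48 n40 a3 a6 a28 a57 a2 a13 a59 a14 a37 a55])
                    qed
                  qed
                next
                  case False
                  note a54 = False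
                  have a55: "\<not> E d4 d5" using nsym[OF m33 m9 a54] .
                  show False
                  proof (cases "E d5 p")
                    case True
                    note a56 = True
                    have a57: "E p d5" using sym[OF m33 pV a56] .
                    show False by (rule coP5_wit[OF gr coP5f rV m33 m9 pV zV n48 n23 d_pr' d_rz n39 n43 n49 n18 n24 d_pz a37 a14 e_rp a1 a54 a56 a36 a11 a29 a4])
                  next
                    case False
                    note a56 = False
                    have a57: "\<not> E p d5" using nsym[OF m33 pV a56] .
                    show False
                    proof (cases "E d5 q")
                      case True
                      note a58 = True
                      have a59: "E q d5" using sym[OF m33 qV a58] .
                      show False by (rule P5_wit[OF gr P5f m9 rV pV qV m33 n21 n18 n15 n40 d_pr' d_qr' n48 d_pq n45 n42 a12 a11 a27 a55 e_rp n_rq a37 e_pq a57 a59])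
                    next
                      case False
                      note a58 = False
                      have a59: "\<not> E q d5" using nsym[OF m33 qV a58] .
                      show False by (rule P5_wit[OF gr P5f qV pV rV zV m33 d_pq' d_qr d_qz n42 d_pr d_pz n45 d_rz n48 n51 a3 a6 a5 a59 a2 a4 a57 a1 a37 a38])
                    qed
                  qed
                qed
              qed
            qed
          next
            case False
            note a29 = False
            have a30: "\<not> E z d4" using nsym[OF m9 zV a29] .
            have o31: "pos d4 < pos r" using oz_p oz_q oz_r opq oqr opr o10 by linarith
            have o32: "pos r < pos z" using oz_p oz_q oz_r opq oqr opr o10 by linarith
            obtain d5 where m33: "d5 \<in> V" and o34: "pos d5 < pos d4" and a35: "\<not> E d5 r" and a36: "E d5 z"
              using LB[OF m9 rV zV o31 o32 a29 a12] by blast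
            have a37: "\<not> E r d5" using nsym[OF m33 rV a35] .
            have a38: "E z d5" using sym[OF m33 zV a36] .
            have o40: "pos d5 < pos d4" using oz_p oz_q oz_r opq oqr opr o10 o34 by linarith
            have n39: "d5 \<noteq> d4" using o40 by auto
            have n41: "d4 \<noteq> d5" using n39 by simp
            have o43: "pos d5 < pos q" using oz_p oz_q oz_r opq oqr opr o10 o34 by linarith
            have n42: "d5 \<noteq> q" using o43 by auto
            have n44: "q \<noteq> d5" using n42 by simp
            have o46: "pos d5 < pos p" using oz_p oz_q oz_r opq oqr opr o10 o34 by linarith
            have n45: "d5 \<noteq> p" using o46 by auto
            have n47: "p \<noteq> d5" using n45 by simp
            have o49: "pos d5 < pos r" using oz_p oz_q oz_r opq oqr opr o10 o34 by linarith
            have n48: "d5 \<noteq> r" using o49 by auto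
            have n50: "r \<noteq> d5" using n48 by simp
            have o52: "pos d5 < pos z" using oz_p oz_q oz_r opq oqr opr o10 o34 by linarith
            have n51: "d5 \<noteq> z" using o52 by auto
            have n53: "z \<noteq> d5" using n51 by simp
            show False
            proof (cases "E d5 d4")
              case True
              note a54 = True
              have a55: "E d4 d5" using sym[OF m33 m9 a54] .
              show False
              proof (cases "E d5 q")
                case True
                note a56 = True
                have a57: "E q d5" using sym[OF m33 qV a56] .
                show False
                proof (cases "E d5 p")
                  case True
                  note a58 = True
                  have a59: "E p d5" using sym[OF m33 pV a58] .
                  show False by (rule coP5_wit[OF gr coP5f pV m9 qV rV m33 n20 d_pq d_pr n47 n15 n21 n41 d_qr n44 n50 a13 e_pq a2 a59 a27 a12 a55 a6 a57 a37])
                next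
                  case False
                  note a58 = False
                  have a59: "\<not> E p d5" using nsym[OF m33 pV a58] .
                  show False by (rule C5_wit[OF gr C5f m9 rV pV qV m33 n21 n18 n15 n41 d_pr' d_qr' n50 d_pq n47 n44 a12 a11 a27 a55 e_rp n_rq a37 e_pq a59 a57])
                qed
              next
                case False
                note a56 = False
                have a57: "\<not> E q d5" using nsym[OF m33 qV a56] .
                show False
                proof (cases "E d5 p")
                  case True
                  note a58 = True
                  have a59: "E p d5" using sym[OF m33 pV a58] .
                  have sm: "pos p + pos q + pos d5 < pos p + pos q + pos r" using oz_p oz_q oz_r opq oqr opr o10 o34 by linarith
                  show False by (rule IH[OF sm pV qV m33 a38 a58 e_pq n_zp n_zq a56])
                next
                  case False
                  note a58 = False
                  have a59: "\<not> E p d5" using nsym[OF m33 pV a58] .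
                  show False by (rule P5_wit[OF gr P5f qV pV rV m9 m33 d_pq' d_qr n17 n44 d_pr n20 n47 n23 n50 n41 a3 a6 a28 a57 a2 a13 a59 a14 a37 a55])
                qed
              qed
            next
              case False
              note a54 = False
              have a55: "\<not> E d4 d5" using nsym[OF m33 m9 a54] .
              show False
              proof (cases "E d5 q")
                case True
                note a56 = True
                have a57: "E q d5" using sym[OF m33 qV a56] .
                show False by (rule P5_wit[OF gr P5f m9 rV zV m33 qV n21 n24 n41 n15 d_rz n50 d_qr' n53 d_qz' n42 a12 a29 a55 a27 a1 a37 n_rq a38 n_zq a56])
              next
                case False
                note a56 = False
                have a57: "\<not> E q d5" using nsym[OF m33 qV a56] .
                show False
                proof (cases "E d5 p")
                  case True
                  note a58 = True
                  have a59: "E p d5" using sym[OF m33 pV a58] .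
                  have sm: "pos p + pos q + pos d5 < pos p + pos q + pos r" using oz_p oz_q oz_r opq oqr opr o10 o34 by linarith
                  show False by (rule IH[OF sm pV qV m33 a38 a58 e_pq n_zp n_zq a56])
                next
                  case False
                  note a58 = False
                  have a59: "\<not> E p d5" using nsym[OF m33 pV a58] .
                  show False by (rule P5_wit[OF gr P5f qV pV rV zV m33 d_pq' d_qr d_qz n44 d_pr d_pz n47 d_rz n50 n53 a3 a6 a5 a57 a2 a4 a59 a1 a37 a38])
                qed
              qed
            qed
          qed
        qed
      next
        case False
        note opr = lt_flip[OF inj pV rV d_pr False]
        have o7: "pos q < pos p" using oz_p oz_q oz_r opq oqr opr by linarith
        have o8: "pos p < pos z" using oz_p oz_q oz_r opq oqr opr by linarith
        obtain d4 where m9: "d4 \<in> V" and o10: "pos d4 < pos q" and a11: "\<not> E d4 p" and a12: "E d4 z"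
          using LB[OF qV pV zV o7 o8 a5 a3] by blast
        have a13: "\<not> E p d4" using nsym[OF m9 pV a11] .
        have a14: "E z d4" using sym[OF m9 zV a12] .
        have o16: "pos d4 < pos q" using oz_p oz_q oz_r opq oqr opr o10 by linarith
        have n15: "d4 \<noteq> q" using o16 by auto
        have n17: "q \<noteq> d4" using n15 by simp
        have o19: "pos d4 < pos r" using oz_p oz_q oz_r opq oqr opr o10 by linarith
        have n18: "d4 \<noteq> r" using o19 by auto
        have n20: "r \<noteq> d4" using n18 by simp
        have o22: "pos d4 < pos p" using oz_p oz_q oz_r opq oqr opr o10 by linarith
        have n21: "d4 \<noteq> p" using o22 by auto
        have n23: "p \<noteq> d4" using n21 by simp
        have o25: "pos d4 < pos z" using oz_p oz_q oz_r opq oqr opr o10 by linarith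
        have n24: "d4 \<noteq> z" using o25 by auto
        have n26: "z \<noteq> d4" using n24 by simp
        show False
        proof (cases "E d4 q")
          case True
          note a27 = True
          have a28: "E q d4" using sym[OF m9 qV a27] .
          show False
          proof (cases "E d4 r")
            case True
            note a29 = True
            have a30: "E r d4" using sym[OF m9 rV a29] .
            show False by (rule coP5_wit[OF gr coP5f rV qV zV pV m9 d_qr' d_rz d_pr' n20 d_qz d_pq' n17 d_pz' n26 n23 n_rq a1 e_rp a30 a5 a3 a28 n_zp a14 a13])
          next
            case False
            note a29 = False
            have a30: "\<not> E r d4" using nsym[OF m9 rV a29] .
            show False by (rule C5_wit[OF gr C5f qV pV rV zV m9 d_pq' d_qr d_qz n17 d_pr d_pz n23 d_rz n20 n26 a3 a6 a5 a28 a2 a4 a13 a1 a30 a14])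
          qed
        next
          case False
          note a27 = False
          have a28: "\<not> E q d4" using nsym[OF m9 qV a27] .
          show False
          proof (cases "E d4 r")
            case True
            note a29 = True
            have a30: "E r d4" using sym[OF m9 rV a29] .
            have o31: "pos d4 < pos r" using oz_p oz_q oz_r opq oqr opr o10 by linarith
            have o32: "pos r < pos p" using oz_p oz_q oz_r opq oqr opr o10 by linarith
            obtain d5 where m33: "d5 \<in> V" and o34: "pos d5 < pos d4" and a35: "\<not> E d5 r" and a36: "E d5 p"
              using LB[OF m9 rV pV o31 o32 a11 a29] by blast
            have a37: "\<not> E r d5" using nsym[OF m33 rV a35] .
            have a38: "E p d5" using sym[OF m33 pV a36] .
            have o40: "pos d5 < pos d4" using oz_p oz_q oz_r opq oqr opr o10 o34 by linarith
            have n39: "d5 \<noteq> d4" using o40 by auto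
            have n41: "d4 \<noteq> d5" using n39 by simp
            have o43: "pos d5 < pos q" using oz_p oz_q oz_r opq oqr opr o10 o34 by linarith
            have n42: "d5 \<noteq> q" using o43 by auto
            have n44: "q \<noteq> d5" using n42 by simp
            have o46: "pos d5 < pos r" using oz_p oz_q oz_r opq oqr opr o10 o34 by linarith
            have n45: "d5 \<noteq> r" using o46 by auto
            have n47: "r \<noteq> d5" using n45 by simp
            have o49: "pos d5 < pos p" using oz_p oz_q oz_r opq oqr opr o10 o34 by linarith
            have n48: "d5 \<noteq> p" using o49 by auto
            have n50: "p \<noteq> d5" using n48 by simp
            have o52: "pos d5 < pos z" using oz_p oz_q oz_r opq oqr opr o10 o34 by linarith
            have n51: "d5 \<noteq> z" using o52 by auto
            have n53: "z \<noteq> d5" using n51 by simp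
            show False
            proof (cases "E d5 d4")
              case True
              note a54 = True
              have a55: "E d4 d5" using sym[OF m33 m9 a54] .
              show False
              proof (cases "E d5 q")
                case True
                note a56 = True
                have a57: "E q d5" using sym[OF m33 qV a56] .
                show False by (rule coP5_wit[OF gr coP5f pV m9 qV rV m33 n23 d_pq d_pr n50 n15 n18 n41 d_qr n44 n47 a13 e_pq a2 a38 a27 a29 a55 a6 a57 a37])
              next
                case False
                note a56 = False
                have a57: "\<not> E q d5" using nsym[OF m33 qV a56] .
                show False
                proof (cases "E d5 z")
                  case True
                  note a58 = True
                  have a59: "E z d5" using sym[OF m33 zV a58] .
                  have sm: "pos p + pos q + pos d5 < pos p + pos q + pos r" using oz_p oz_q oz_r opq oqr opr o10 o34 by linarith
                  show False by (rule IH[OF sm pV qV m33 a59 a36 e_pq n_zp n_zq a56])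
                next
                  case False
                  note a58 = False
                  have a59: "\<not> E z d5" using nsym[OF m33 zV a58] .
                  show False by (rule P5_wit[OF gr P5f qV pV m33 m9 zV d_pq' n44 n17 d_qz n50 n23 d_pz n39 n51 n24 a3 a57 a28 a5 a38 a13 a4 a54 a58 a12])
                qed
              qed
            next
              case False
              note a54 = False
              have a55: "\<not> E d4 d5" using nsym[OF m33 m9 a54] .
              show False
              proof (cases "E d5 z")
                case True
                note a56 = True
                have a57: "E z d5" using sym[OF m33 zV a56] .
                show False by (rule coP5_wit[OF gr coP5f rV m33 m9 pV zV n47 n20 d_pr' d_rz n39 n48 n51 n21 n24 d_pz a37 a30 e_rp a1 a54 a36 a56 a11 a12 a4])
              next
                case False
                note a56 = False
                have a57: "\<not> E z d5" using nsym[OF m33 zV a56] .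
                show False
                proof (cases "E d5 q")
                  case True
                  note a58 = True
                  have a59: "E q d5" using sym[OF m33 qV a58] .
                  have sm: "pos p + pos d5 + pos r < pos p + pos q + pos r" using oz_p oz_q oz_r opq oqr opr o10 o34 by linarith
                  show False by (rule IH[OF sm pV m33 rV e_zr e_rp a38 n_zp a57 a37])
                next
                  case False
                  note a58 = False
                  have a59: "\<not> E q d5" using nsym[OF m33 qV a58] .
                  have sm: "pos p + pos d5 + pos r < pos p + pos q + pos r" using oz_p oz_q oz_r opq oqr opr o10 o34 by linarith
                  show False by (rule IH[OF sm pV m33 rV e_zr e_rp a38 n_zp a57 a37])
                qed
              qed
            qed
          next
            case False
            note a29 = False
            have a30: "\<not> E r d4" using nsym[OF m9 rV a29] .
            show False by (rule P5_wit[OF gr P5f qV pV rV zV m9 d_pq' d_qr d_qz n17 d_pr d_pz n23 d_rz n20 n26 a3 a6 a5 a28 a2 a4 a13 a1 a30 a14])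
          qed
        qed
      qed
    next
      case False
      note oqr = lt_flip[OF inj qV rV d_qr False]
      show False
      proof (cases "pos p < pos r")
        case True
        note opr = True
        show False using opq oqr opr by linarith
      next
        case False
        note opr = lt_flip[OF inj pV rV d_pr False]
        have o7: "pos q < pos p" using oz_p oz_q oz_r opq oqr opr by linarith
        have o8: "pos p < pos z" using oz_p oz_q oz_r opq oqr opr by linarith
        obtain d4 where m9: "d4 \<in> V" and o10: "pos d4 < pos q" and a11: "\<not> E d4 p" and a12: "E d4 z"
          using LB[OF qV pV zV o7 o8 a5 a3] by blast
        have a13: "\<not> E p d4" using nsym[OF m9 pV a11] .
        have a14: "E z d4" using sym[OF m9 zV a12] .
        have n15: "d4 \<noteq> r" using a11 e_rp by auto
        have n16: "r \<noteq> d4" using n15 by simp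
        have o18: "pos d4 < pos q" using oz_p oz_q oz_r opq oqr opr o10 by linarith
        have n17: "d4 \<noteq> q" using o18 by auto
        have n19: "q \<noteq> d4" using n17 by simp
        have o21: "pos d4 < pos p" using oz_p oz_q oz_r opq oqr opr o10 by linarith
        have n20: "d4 \<noteq> p" using o21 by auto
        have n22: "p \<noteq> d4" using n20 by simp
        have o24: "pos d4 < pos z" using oz_p oz_q oz_r opq oqr opr o10 by linarith
        have n23: "d4 \<noteq> z" using o24 by auto
        have n25: "z \<noteq> d4" using n23 by simp
        show False
        proof (cases "pos d4 < pos r")
          case True
          note o26 = True
          show False
          proof (cases "E d4 r")
            case True
            note a27 = True
            have a28: "E r d4" using sym[OF m9 rV a27] .
            show False
            proof (cases "E d4 q")
              case True
              note a29 = True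
              have a30: "E q d4" using sym[OF m9 qV a29] .
              show False by (rule coP5_wit[OF gr coP5f rV qV zV pV m9 d_qr' d_rz d_pr' n16 d_qz d_pq' n19 d_pz' n25 n22 n_rq a1 e_rp a28 a5 a3 a30 n_zp a14 a13])
            next
              case False
              note a29 = False
              have a30: "\<not> E q d4" using nsym[OF m9 qV a29] .
              have o31: "pos d4 < pos r" using oz_p oz_q oz_r opq oqr opr o10 o26 by linarith
              have o32: "pos r < pos q" using oz_p oz_q oz_r opq oqr opr o10 o26 by linarith
              obtain d5 where m33: "d5 \<in> V" and o34: "pos d5 < pos d4" and a35: "\<not> E d5 r" and a36: "E d5 q"
                using LB[OF m9 rV qV o31 o32 a29 a27] by blast
              have a37: "\<not> E r d5" using nsym[OF m33 rV a35] .
              have a38: "E q d5" using sym[OF m33 qV a36] .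
              have o40: "pos d5 < pos d4" using oz_p oz_q oz_r opq oqr opr o10 o26 o34 by linarith
              have n39: "d5 \<noteq> d4" using o40 by auto
              have n41: "d4 \<noteq> d5" using n39 by simp
              have o43: "pos d5 < pos r" using oz_p oz_q oz_r opq oqr opr o10 o26 o34 by linarith
              have n42: "d5 \<noteq> r" using o43 by auto
              have n44: "r \<noteq> d5" using n42 by simp
              have o46: "pos d5 < pos q" using oz_p oz_q oz_r opq oqr opr o10 o26 o34 by linarith
              have n45: "d5 \<noteq> q" using o46 by auto
              have n47: "q \<noteq> d5" using n45 by simp
              have o49: "pos d5 < pos p" using oz_p oz_q oz_r opq oqr opr o10 o26 o34 by linarith
              have n48: "d5 \<noteq> p" using o49 by auto
              have n50: "p \<noteq> d5" using n48 by simp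
              have o52: "pos d5 < pos z" using oz_p oz_q oz_r opq oqr opr o10 o26 o34 by linarith
              have n51: "d5 \<noteq> z" using o52 by auto
              have n53: "z \<noteq> d5" using n51 by simp
              show False
              proof (cases "E d5 d4")
                case True
                note a54 = True
                have a55: "E d4 d5" using sym[OF m33 m9 a54] .
                show False
                proof (cases "E d5 p")
                  case True
                  note a56 = True
                  have a57: "E p d5" using sym[OF m33 pV a56] .
                  show False by (rule coP5_wit[OF gr coP5f pV m9 qV rV m33 n22 d_pq d_pr n50 n17 n15 n41 d_qr n47 n44 a13 e_pq a2 a57 a29 a27 a55 a6 a38 a37])
                next
                  case False
                  note a56 = False
                  have a57: "\<not> E p d5" using nsym[OF m33 pV a56] .
                  show False by (rule C5_wit[OF gr C5f m9 rV pV qV m33 n15 n20 n17 n41 d_pr' d_qr' n44 d_pq n50 n47 a27 a11 a29 a55 e_rp n_rq a37 e_pq a57 a38])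
                qed
              next
                case False
                note a54 = False
                have a55: "\<not> E d4 d5" using nsym[OF m33 m9 a54] .
                show False
                proof (cases "E d5 p")
                  case True
                  note a56 = True
                  have a57: "E p d5" using sym[OF m33 pV a56] .
                  show False
                  proof (cases "E d5 z")
                    case True
                    note a58 = True
                    have a59: "E z d5" using sym[OF m33 zV a58] .
                    show False by (rule coP5_wit[OF gr coP5f rV m33 m9 pV zV n44 n16 d_pr' d_rz n39 n48 n51 n20 n23 d_pz a37 a28 e_rp a1 a54 a56 a58 a11 a12 a4])
                  next
                    case False
                    note a58 = False
                    have a59: "\<not> E z d5" using nsym[OF m33 zV a58] .
                    have sm: "pos p + pos d5 + pos r < pos p + pos q + pos r" using oz_p oz_q oz_r opq oqr opr o10 o26 o34 by linarith
                    show False by (rule IH[OF sm pV m33 rV e_zr e_rp a57 n_zp a59 a37])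
                  qed
                next
                  case False
                  note a56 = False
                  have a57: "\<not> E p d5" using nsym[OF m33 pV a56] .
                  show False by (rule P5_wit[OF gr P5f m9 rV pV qV m33 n15 n20 n17 n41 d_pr' d_qr' n44 d_pq n50 n47 a27 a11 a29 a55 e_rp n_rq a37 e_pq a57 a38])
                qed
              qed
            qed
          next
            case False
            note a27 = False
            have a28: "\<not> E r d4" using nsym[OF m9 rV a27] .
            show False
            proof (cases "E d4 q")
              case True
              note a29 = True
              have a30: "E q d4" using sym[OF m9 qV a29] .
              show False by (rule C5_wit[OF gr C5f rV pV qV m9 zV d_pr' d_qr' n16 d_rz d_pq n22 d_pz n19 d_qz n23 e_rp n_rq a28 a1 e_pq a13 a4 a30 a5 a12])
            next
              case False
              note a29 = False
              have a30: "\<not> E q d4" using nsym[OF m9 qV a29] .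
              show False by (rule P5_wit[OF gr P5f qV pV rV zV m9 d_pq' d_qr d_qz n19 d_pr d_pz n22 d_rz n16 n25 a3 a6 a5 a30 a2 a4 a13 a1 a28 a14])
            qed
          qed
        next
          case False
          have o26: "pos r < pos d4" by (rule lt_flip[OF inj m9 rV n15 False])
          show False
          proof (cases "E d4 r")
            case True
            note a27 = True
            have a28: "E r d4" using sym[OF m9 rV a27] .
            show False
            proof (cases "E d4 q")
              case True
              note a29 = True
              have a30: "E q d4" using sym[OF m9 qV a29] .
              show False by (rule coP5_wit[OF gr coP5f rV qV zV pV m9 d_qr' d_rz d_pr' n16 d_qz d_pq' n19 d_pz' n25 n22 n_rq a1 e_rp a28 a5 a3 a30 n_zp a14 a13])
            next
              case False
              note a29 = False
              have a30: "\<not> E q d4" using nsym[OF m9 qV a29] .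
              have o31: "pos r < pos d4" using oz_p oz_q oz_r opq oqr opr o10 o26 by linarith
              have o32: "pos d4 < pos q" using oz_p oz_q oz_r opq oqr opr o10 o26 by linarith
              obtain d5 where m33: "d5 \<in> V" and o34: "pos d5 < pos r" and a35: "\<not> E d5 d4" and a36: "E d5 q"
                using LB[OF rV m9 qV o31 o32 n_rq a28] by blast
              have a37: "\<not> E d4 d5" using nsym[OF m33 m9 a35] .
              have a38: "E q d5" using sym[OF m33 qV a36] .
              have o40: "pos d5 < pos r" using oz_p oz_q oz_r opq oqr opr o10 o26 o34 by linarith
              have n39: "d5 \<noteq> r" using o40 by auto
              have n41: "r \<noteq> d5" using n39 by simp
              have o43: "pos d5 < pos d4" using oz_p oz_q oz_r opq oqr opr o10 o26 o34 by linarith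
              have n42: "d5 \<noteq> d4" using o43 by auto
              have n44: "d4 \<noteq> d5" using n42 by simp
              have o46: "pos d5 < pos q" using oz_p oz_q oz_r opq oqr opr o10 o26 o34 by linarith
              have n45: "d5 \<noteq> q" using o46 by auto
              have n47: "q \<noteq> d5" using n45 by simp
              have o49: "pos d5 < pos p" using oz_p oz_q oz_r opq oqr opr o10 o26 o34 by linarith
              have n48: "d5 \<noteq> p" using o49 by auto
              have n50: "p \<noteq> d5" using n48 by simp
              have o52: "pos d5 < pos z" using oz_p oz_q oz_r opq oqr opr o10 o26 o34 by linarith
              have n51: "d5 \<noteq> z" using o52 by auto
              have n53: "z \<noteq> d5" using n51 by simp
              show False
              proof (cases "E d5 r")
                case True
                note a54 = True
                have a55: "E r d5" using sym[OF m33 rV a54] .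
                show False
                proof (cases "E d5 p")
                  case True
                  note a56 = True
                  have a57: "E p d5" using sym[OF m33 pV a56] .
                  show False
                  proof (cases "E d5 z")
                    case True
                    note a58 = True
                    have a59: "E z d5" using sym[OF m33 zV a58] .
                    have o60: "pos d5 < pos r" using oz_p oz_q oz_r opq oqr opr o10 o26 o34 by linarith
                    have o61: "pos r < pos d4" using oz_p oz_q oz_r opq oqr opr o10 o26 o34 by linarith
                    obtain d6 where m62: "d6 \<in> V" and o63: "pos d6 < pos d5" and a64: "\<not> E d6 r" and a65: "E d6 d4"
                      using LB[OF m33 rV m9 o60 o61 a35 a54] by blast
                    have a66: "\<not> E r d6" using nsym[OF m62 rV a64] .
                    have a67: "E d4 d6" using sym[OF m62 m9 a65] .
                    have o69: "pos d6 < pos d5" using oz_p oz_q oz_r opq oqr opr o10 o26 o34 o63 by linarith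
                    have n68: "d6 \<noteq> d5" using o69 by auto
                    have n70: "d5 \<noteq> d6" using n68 by simp
                    have o72: "pos d6 < pos r" using oz_p oz_q oz_r opq oqr opr o10 o26 o34 o63 by linarith
                    have n71: "d6 \<noteq> r" using o72 by auto
                    have n73: "r \<noteq> d6" using n71 by simp
                    have o75: "pos d6 < pos d4" using oz_p oz_q oz_r opq oqr opr o10 o26 o34 o63 by linarith
                    have n74: "d6 \<noteq> d4" using o75 by auto
                    have n76: "d4 \<noteq> d6" using n74 by simp
                    have o78: "pos d6 < pos q" using oz_p oz_q oz_r opq oqr opr o10 o26 o34 o63 by linarith
                    have n77: "d6 \<noteq> q" using o78 by auto
                    have n79: "q \<noteq> d6" using n77 by simp
                    have o81: "pos d6 < pos p" using oz_p oz_q oz_r opq oqr opr o10 o26 o34 o63 by linarith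
                    have n80: "d6 \<noteq> p" using o81 by auto
                    have n82: "p \<noteq> d6" using n80 by simp
                    have o84: "pos d6 < pos z" using oz_p oz_q oz_r opq oqr opr o10 o26 o34 o63 by linarith
                    have n83: "d6 \<noteq> z" using o84 by auto
                    have n85: "z \<noteq> d6" using n83 by simp
                    show False
                    proof (cases "E d6 d5")
                      case True
                      note a86 = True
                      have a87: "E d5 d6" using sym[OF m62 m33 a86] .
                      show False
                      proof (cases "E d6 q")
                        case True
                        note a88 = True
                        have a89: "E q d6" using sym[OF m62 qV a88] .
                        show False by (rule coP5_wit[OF gr coP5f m33 m9 qV rV m62 n42 n45 n39 n70 n17 n15 n76 d_qr n79 n73 a35 a36 a54 a87 a29 a27 a67 a6 a89 a66])
                      next
                        case False
                        note a88 = False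
                        have a89: "\<not> E q d6" using nsym[OF m62 qV a88] .
                        show False
                        proof (cases "E d6 p")
                          case True
                          note a90 = True
                          have a91: "E p d6" using sym[OF m62 pV a90] .
                          show False
                          proof (cases "E d6 z")
                            case True
                            note a92 = True
                            have a93: "E z d6" using sym[OF m62 zV a92] .
                            have sm: "pos p + pos q + pos d6 < pos p + pos q + pos r" using oz_p oz_q oz_r opq oqr opr o10 o26 o34 o63 by linarith
                            show False by (rule IH[OF sm pV qV m62 a93 a90 e_pq n_zp n_zq a88])
                          next
                            case False
                            note a92 = False
                            have a93: "\<not> E z d6" using nsym[OF m62 zV a92] .
                            show False by (rule coP5_wit[OF gr coP5f m33 m9 pV zV m62 n42 n48 n51 n70 n20 n23 n76 d_pz n82 n85 a35 a56 a58 a87 a11 a12 a67 a4 a91 a93])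
                          qed
                        next
                          case False
                          note a90 = False
                          have a91: "\<not> E p d6" using nsym[OF m62 pV a90] .
                          show False by (rule coP5_wit[OF gr coP5f m33 m9 pV m62 rV n42 n48 n70 n39 n20 n76 n15 n82 d_pr n71 a35 a56 a87 a54 a11 a67 a27 a91 a2 a64])
                        qed
                      qed
                    next
                      case False
                      note a86 = False
                      have a87: "\<not> E d5 d6" using nsym[OF m62 m33 a86] .
                      show False
                      proof (cases "E d6 q")
                        case True
                        note a88 = True
                        have a89: "E q d6" using sym[OF m62 qV a88] .
                        show False by (rule C5_wit[OF gr C5f m33 rV m9 m62 qV n39 n42 n70 n45 n16 n73 d_qr' n76 n17 n77 a54 a35 a87 a36 a28 a66 n_rq a67 a29 a88])
                      next
                        case False
                        note a88 = False
                        have a89: "\<not> E q d6" using nsym[OF m62 qV a88] .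
                        show False by (rule P5_wit[OF gr P5f qV m33 rV m9 m62 n47 d_qr n19 n79 n39 n42 n70 n16 n73 n76 a38 a6 a30 a89 a54 a35 a87 a28 a66 a67])
                      qed
                    qed
                  next
                    case False
                    note a58 = False
                    have a59: "\<not> E z d5" using nsym[OF m33 zV a58] .
                    have sm: "pos d5 + pos q + pos r < pos p + pos q + pos r" using oz_p oz_q oz_r opq oqr opr o10 o26 o34 by linarith
                    show False by (rule IH[OF sm m33 qV rV e_zr a55 a36 a59 n_zq n_rq])
                  qed
                next
                  case False
                  note a56 = False
                  have a57: "\<not> E p d5" using nsym[OF m33 pV a56] .
                  show False
                  proof (cases "E d5 z")
                    case True
                    note a58 = True
                    have a59: "E z d5" using sym[OF m33 zV a58] .
                    show False by (rule coP5_wit[OF gr coP5f rV qV zV pV m33 d_qr' d_rz d_pr' n41 d_qz d_pq' n47 d_pz' n53 n50 n_rq a1 e_rp a55 a5 a3 a38 n_zp a59 a57])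
                  next
                    case False
                    note a58 = False
                    have a59: "\<not> E z d5" using nsym[OF m33 zV a58] .
                    have sm: "pos d5 + pos q + pos r < pos p + pos q + pos r" using oz_p oz_q oz_r opq oqr opr o10 o26 o34 by linarith
                    show False by (rule IH[OF sm m33 qV rV e_zr a55 a36 a59 n_zq n_rq])
                  qed
                qed
              next
                case False
                note a54 = False
                have a55: "\<not> E r d5" using nsym[OF m33 rV a54] .
                show False
                proof (cases "E d5 p")
                  case True
                  note a56 = True
                  have a57: "E p d5" using sym[OF m33 pV a56] .
                  show False
                  proof (cases "E d5 z")
                    case True
                    note a58 = True
                    have a59: "E z d5" using sym[OF m33 zV a58] .
                    show False by (rule coP5_wit[OF gr coP5f rV m33 m9 pV zV n41 n16 d_pr' d_rz n42 n48 n51 n20 n23 d_pz a55 a28 e_rp a1 a35 a56 a58 a11 a12 a4])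
                  next
                    case False
                    note a58 = False
                    have a59: "\<not> E z d5" using nsym[OF m33 zV a58] .
                    have sm: "pos p + pos d5 + pos r < pos p + pos q + pos r" using oz_p oz_q oz_r opq oqr opr o10 o26 o34 by linarith
                    show False by (rule IH[OF sm pV m33 rV e_zr e_rp a57 n_zp a59 a55])
                  qed
                next
                  case False
                  note a56 = False
                  have a57: "\<not> E p d5" using nsym[OF m33 pV a56] .
                  show False by (rule P5_wit[OF gr P5f m9 rV pV qV m33 n15 n20 n17 n44 d_pr' d_qr' n41 d_pq n50 n47 a27 a11 a29 a37 e_rp n_rq a55 e_pq a57 a38])
                qed
              qed
            qed
          next
            case False
            note a27 = False
            have a28: "\<not> E r d4" using nsym[OF m9 rV a27] .
            show False
            proof (cases "E d4 q")
              case True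
              note a29 = True
              have a30: "E q d4" using sym[OF m9 qV a29] .
              show False by (rule C5_wit[OF gr C5f rV pV qV m9 zV d_pr' d_qr' n16 d_rz d_pq n22 d_pz n19 d_qz n23 e_rp n_rq a28 a1 e_pq a13 a4 a30 a5 a12])
            next
              case False
              note a29 = False
              have a30: "\<not> E q d4" using nsym[OF m9 qV a29] .
              show False by (rule P5_wit[OF gr P5f qV pV rV zV m9 d_pq' d_qr d_qz n19 d_pr d_pz n22 d_rz n16 n25 a3 a6 a5 a30 a2 a4 a13 a1 a28 a14])
            qed
          qed
        qed
      qed
    qed
  qed
qed

lemma descent:
  fixes V :: "'a set" and E :: "'a \<Rightarrow> 'a \<Rightarrow> bool" and pos :: "'a \<Rightarrow> nat"
  assumes gr: "graph V E" and P5f: "P5_free V E" and coP5f: "coP5_free V E" and C5f: "C5_free V E"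
    and inj: "inj_on pos V"
    and LB: "\<And>a b c. a\<in>V \<Longrightarrow> b\<in>V \<Longrightarrow> c\<in>V \<Longrightarrow> pos a < pos b \<Longrightarrow> pos b < pos c \<Longrightarrow> \<not>E a c \<Longrightarrow> E a b \<Longrightarrow> \<exists>d\<in>V. pos d < pos a \<and> \<not>E d b \<and> E d c"
    and zV: "z \<in> V" and zmax: "\<And>x. x \<in> V \<Longrightarrow> pos x \<le> pos z"
  shows "p\<in>V \<Longrightarrow> q\<in>V \<Longrightarrow> r\<in>V \<Longrightarrow> E z r \<Longrightarrow> E r p \<Longrightarrow> E p q \<Longrightarrow> \<not>E z p \<Longrightarrow> \<not>E z q \<Longrightarrow> \<not>E r q \<Longrightarrow> False"
proof -
  have main: "\<forall>p q r. pos p + pos q + pos r < m \<longrightarrow> p\<in>V \<longrightarrow> q\<in>V \<longrightarrow> r\<in>V \<longrightarrow> E z r \<longrightarrow> E r p \<longrightarrow> E p q \<longrightarrow> \<not>E z p \<longrightarrow> \<not>E z q \<longrightarrow> \<not>E r q \<longrightarrow> False" for m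
  proof (induction m)
    case 0 show ?case by simp
  next
    case (Suc m)
    show ?case
    proof (intro allI impI)
      fix p q r
      assume s: "pos p + pos q + pos r < Suc m" and h: "p\<in>V" "q\<in>V" "r\<in>V" "E z r" "E r p" "E p q" "\<not>E z p" "\<not>E z q" "\<not>E r q"
      show False
      proof (rule descent_step[OF gr P5f coP5f C5f inj LB zV zmax _ h])
        fix p' q' r'
        assume "pos p' + pos q' + pos r' < pos p + pos q + pos r" "p'\<in>V" "q'\<in>V" "r'\<in>V" "E z r'" "E r' p'" "E p' q'" "\<not>E z p'" "\<not>E z q'" "\<not>E r' q'"
        then show False using Suc.IH s by (meson less_Suc_eq_le order_less_le_trans)
      qed
    qed
  qed
  show "p\<in>V \<Longrightarrow> q\<in>V \<Longrightarrow> r\<in>V \<Longrightarrow> E z r \<Longrightarrow> E r p \<Longrightarrow> E p q \<Longrightarrow> \<not>E z p \<Longrightarrow> \<not>E z q \<Longrightarrow> \<not>E r q \<Longrightarrow> False"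
    using main[of "Suc (pos p + pos q + pos r)"] by blast
qed




theorem lemma2p7:
  fixes V :: "'a set" and E :: "'a \<Rightarrow> 'a \<Rightarrow> bool"
  assumes "graph V E"
    and "prime_graph V E"
    and "P5_free V E" and "coP5_free V E" and "C5_free V E"
  shows "(\<exists>v\<in>V. antisimplicial V E v) \<or> one_join V E"
proof -
  note gr = assms(1) and pr = assms(2)
  have fin: "finite V" using gr unfolding graph_def by blast
  have symE: "\<And>x y. x\<in>V \<Longrightarrow> y\<in>V \<Longrightarrow> E x y \<Longrightarrow> E y x" using gr unfolding graph_def by blast
  have irr: "\<And>x. x\<in>V \<Longrightarrow> \<not> E x x" using gr unfolding graph_def by blast
  obtain pos :: "'a \<Rightarrow> nat" where inj: "inj_on pos V" and LB0: "\<forall>a\<in>V. \<forall>b\<in>V. \<forall>c\<in>V. pos a < pos b \<longrightarrow> pos b < pos c \<longrightarrow>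
     \<not> E a c \<longrightarrow> \<not> \<not> E a b \<longrightarrow> (\<exists>d\<in>V. pos d < pos a \<and> \<not> E d b \<and> \<not> \<not> E d c)"
    using lexbfs_exists[OF fin, of "\<lambda>x y. \<not> E x y"] by blast
  have LB: "\<And>a b c. a\<in>V \<Longrightarrow> b\<in>V \<Longrightarrow> c\<in>V \<Longrightarrow> pos a < pos b \<Longrightarrow> pos b < pos c \<Longrightarrow> \<not>E a c \<Longrightarrow> E a b \<Longrightarrow> \<exists>d\<in>V. pos d < pos a \<and> \<not>E d b \<and> E d c"
    using LB0 by blast
  have Vne: "V \<noteq> {}" using pr unfolding prime_graph_def by auto
  obtain z where zV: "z \<in> V" and zmax: "\<And>x. x \<in> V \<Longrightarrow> pos x \<le> pos z"
  proof -
    have "Max (pos ` V) \<in> pos ` V" using fin Vne by auto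
    then obtain z where "z \<in> V" "pos z = Max (pos ` V)" by auto
    moreover have "\<And>x. x \<in> V \<Longrightarrow> pos x \<le> Max (pos ` V)" using fin by auto
    ultimately show ?thesis using that by auto
  qed
  have noP4: "\<And>p q r. p\<in>V \<Longrightarrow> q\<in>V \<Longrightarrow> r\<in>V \<Longrightarrow> E z r \<Longrightarrow> E r p \<Longrightarrow> E p q \<Longrightarrow> \<not>E z p \<Longrightarrow> \<not>E z q \<Longrightarrow> \<not>E r q \<Longrightarrow> False"
    by (rule descent[OF gr assms(3,4,5) inj LB zV zmax]) blast+
  have "antisimplicial V E z"
  proof (rule ccontr)
    assume "\<not> antisimplicial V E z"
    then obtain x y where xy: "x \<in> V" "y \<in> V" "\<not> E z x" "\<not> E z y" "E x y"
      using zV unfolding antisimplicial_def stable_set_def nbhd_def by auto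
    define M where "M = {w \<in> V. w \<noteq> z \<and> \<not> E z w}"
    define R where "R = (\<lambda>u w. u \<in> M \<and> w \<in> M \<and> E u w)"
    define K where "K = {w. R\<^sup>*\<^sup>* x w}"
    have xz: "x \<noteq> z" using xy zV by auto
    have yz: "y \<noteq> z" using xy symE zV by metis
    have xM: "x \<in> M" and yM: "y \<in> M" using xy xz yz unfolding M_def by auto
    have xy_ne: "x \<noteq> y" using xy irr by auto
    have KM: "K \<subseteq> M \<union> {x}"
    proof
      fix w assume "w \<in> K"
      hence "R\<^sup>*\<^sup>* x w" unfolding K_def by simp
      thus "w \<in> M \<union> {x}" by (induction rule: rtranclp_induct) (auto simp: R_def)
    qed
    hence KM': "K \<subseteq> M" using xM by auto
    have xK: "x \<in> K" and yK: "y \<in> K" unfolding K_def using xM yM xy by (auto simp: R_def)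
    have KV: "K \<subseteq> V" using KM' unfolding M_def by auto
    have finK: "finite K" using KV fin finite_subset by blast
    have "card {x, y} \<le> card K" using xK yK finK by (intro card_mono) auto
    hence c1: "1 < card K" using xy_ne by simp
    have zK: "z \<notin> K" using KM' unfolding M_def by auto
    have c2: "card K < card V" using KV zK zV fin by (metis psubsetI psubset_card_mono)
    have nomix: "\<not> mixed_on E b K" if bV: "b \<in> V - K" for b
    proof (cases "b = z")
      case True then show ?thesis using KM' unfolding mixed_on_def M_def by auto
    next
      case bz: False
      show ?thesis
      proof (cases "b \<in> M")
        case True
        have "\<not> E b w" if "w \<in> K" for w
        proof
          assume "E b w"
          hence "R w b" using True that KM' KV bV symE unfolding R_def by auto
          hence "b \<in> K" using that unfolding K_def by auto
          thus False using bV by auto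
        qed
        then show ?thesis unfolding mixed_on_def by auto
      next
        case False
        hence Ezb: "E z b" using bV bz unfolding M_def by auto
        have eq: "E b w \<longleftrightarrow> E b x" if "R\<^sup>*\<^sup>* x w" for w
          using that
        proof (induction rule: rtranclp_induct)
          case base then show ?case by simp
        next
          case (step w1 w2)
          have w: "w1 \<in> M" "w2 \<in> M" "E w1 w2" using step(2) unfolding R_def by auto
          have wV: "w1 \<in> V" "w2 \<in> V" "\<not> E z w1" "\<not> E z w2" using w unfolding M_def by auto
          have "E b w1 \<longleftrightarrow> E b w2"
          proof
            assume "E b w1" show "E b w2"
            proof (rule ccontr)
              assume "\<not> E b w2"
              show False by (rule noP4[of w1 w2 b]) (use wV w bV Ezb \<open>E b w1\<close> \<open>\<not> E b w2\<close> in auto)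
            qed
          next
            assume "E b w2" show "E b w1"
            proof (rule ccontr)
              assume "\<not> E b w1"
              show False by (rule noP4[of w2 w1 b]) (use wV w bV Ezb \<open>E b w2\<close> \<open>\<not> E b w1\<close> symE in auto)
            qed
          qed
          then show ?case using step.IH by simp
        qed
        show ?thesis unfolding mixed_on_def
        proof
          assume "(\<exists>w\<in>K. E b w) \<and> (\<exists>w\<in>K. \<not> E b w)"
          then obtain w1 w2 where "w1 \<in> K" "E b w1" "w2 \<in> K" "\<not> E b w2" by blast
          with eq[of w1] eq[of w2] show False unfolding K_def by simp
        qed
      qed
    qed
    have "homogeneous_set V E K" unfolding homogeneous_set_def using KV c1 c2 nomix by auto
    thus False using pr unfolding prime_graph_def by auto
  qed
  thus ?thesis using zV by auto
qed


end
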